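(* (1) For any $X\in\mathfrak{gl}(V)$, the series $\exp(X)=\sum_{i\ge0}X^i/i!$ defines a well-defined automorphism of $V$ lying in $\mathrm{GL}(V)$; hence there is a map $\mathrm{Exp}:\mathfrak{gl}(V)\to\mathrm{GL}(V)$, $X\mapsto\exp(X)$. (2) The image of $\mathrm{Exp}$ generates the group $\mathrm{GL}(V)$.
   Context: $\Lambda=\varinjlim\Lambda(N)$ is the Grassmann algebra of infinite degree, the direct limit of the exterior algebras $\Lambda(N)=\wedge(\mathbb{C}^N)$, $\mathbb{Z}_2$-graded and supercommutative. $V_{\mathbb{C}}$ is a finite-dimensional $\mathbb{Z}_2$-graded complex vector space and $V=V_{\mathbb{C}}\otimes_{\mathbb{C}}\Lambda$. $\mathrm{GL}(V)$ is the group of invertible even $\Lambda$-linear endomorphisms of $V$, and $\mathfrak{gl}(V)=(\mathrm{End}_{\mathbb{C}}(V_{\mathbb{C}})\otimes_{\mathbb{C}}\Lambda)_{\bar0}$ (the even elements). *)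

theory Defs
  imports Complex_Main "HOL-Algebra.Generated_Groups"
begin

text \<open>An element of Lambda is represented by its coefficients with respect to the
monomial basis e_S = e_s1 ... e_sk (s1 < ... < sk, S a finite set of naturals),
with only finitely many nonzero coefficients. This is exactly the direct limit
of the exterior algebras Lambda(N) = wedge(C^N).\<close>

type_synonym grass = "nat set \<Rightarrow> complex"

definition grass_elems :: "grass set" where
  "grass_elems = {a. finite {S. a S \<noteq> 0} \<and> (\<forall>S. a S \<noteq> 0 \<longrightarrow> finite S)}"

definition gzero :: grass where "gzero = (\<lambda>_. 0)"

definition gone :: grass where "gone = (\<lambda>S. if S = {} then 1 else 0)"

text \<open>Sign of e_S e_T = sign * e_(S union T) for disjoint S, T: number of inversions.\<close>
definition gsign :: "nat set \<Rightarrow> nat set \<Rightarrow> complex" where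
  "gsign S T = (-1) ^ card {(s, t). s \<in> S \<and> t \<in> T \<and> t < s}"

definition gmult :: "grass \<Rightarrow> grass \<Rightarrow> grass" where
  "gmult a b = (\<lambda>U. if finite U then (\<Sum>S\<in>Pow U. gsign S (U - S) * a S * b (U - S)) else 0)"

definition grass_even :: "grass \<Rightarrow> bool" where
  "grass_even a \<longleftrightarrow> a \<in> grass_elems \<and> (\<forall>S. odd (card S) \<longrightarrow> a S = 0)"

definition grass_odd :: "grass \<Rightarrow> bool" where
  "grass_odd a \<longleftrightarrow> a \<in> grass_elems \<and> (\<forall>S. even (card S) \<longrightarrow> a S = 0)"

text \<open>Homogeneous basis indices 0..<p+q; index i is odd iff p \<le> i.
A matrix is a function nat => nat => grass, zero outside (p+q) x (p+q).\<close>

type_synonym gmat = "nat \<Rightarrow> nat \<Rightarrow> grass"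

definition idx_odd :: "nat \<Rightarrow> nat \<Rightarrow> bool" where
  "idx_odd p i \<longleftrightarrow> p \<le> i"

text \<open>Even elements of End(V_C) tensor Lambda.\<close>
definition even_gmat :: "nat \<Rightarrow> nat \<Rightarrow> gmat \<Rightarrow> bool" where
  "even_gmat p q A \<longleftrightarrow>
     (\<forall>i j. if i < p + q \<and> j < p + q
            then (if idx_odd p i = idx_odd p j then grass_even (A i j) else grass_odd (A i j))
            else A i j = gzero)"

definition gl :: "nat \<Rightarrow> nat \<Rightarrow> gmat set" where
  "gl p q = {A. even_gmat p q A}"

definition gmat_mult :: "nat \<Rightarrow> gmat \<Rightarrow> gmat \<Rightarrow> gmat" where
  "gmat_mult n A B = (\<lambda>i j. if i < n \<and> j < n
      then (\<lambda>U. \<Sum>k<n. gmult (A i k) (B k j) U) else gzero)"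

definition gmat_one :: "nat \<Rightarrow> gmat" where
  "gmat_one n = (\<lambda>i j. if i = j \<and> i < n then gone else gzero)"

definition gmat_pow :: "nat \<Rightarrow> gmat \<Rightarrow> nat \<Rightarrow> gmat" where
  "gmat_pow n A k = (gmat_mult n A ^^ k) (gmat_one n)"

text \<open>GL(V): invertible even Lambda-linear endomorphisms of V = V_C tensor Lambda.\<close>
definition GLset :: "nat \<Rightarrow> nat \<Rightarrow> gmat set" where
  "GLset p q = {A. even_gmat p q A \<and>
     (\<exists>B. even_gmat p q B \<and> gmat_mult (p + q) A B = gmat_one (p + q)
                          \<and> gmat_mult (p + q) B A = gmat_one (p + q))}"

definition GLgrp :: "nat \<Rightarrow> nat \<Rightarrow> gmat monoid" where
  "GLgrp p q = \<lparr>carrier = GLset p q, mult = gmat_mult (p + q), one = gmat_one (p + q)\<rparr>"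

definition expsum :: "nat \<Rightarrow> nat \<Rightarrow> gmat \<Rightarrow> nat \<Rightarrow> nat \<Rightarrow> nat \<Rightarrow> nat set \<Rightarrow> complex" where
  "expsum p q X m i j U = (\<Sum>k<m. gmat_pow (p + q) X k i j U / of_nat (fact k))"

definition gexp :: "nat \<Rightarrow> nat \<Rightarrow> gmat \<Rightarrow> gmat" where
  "gexp p q X = (\<lambda>i j U. lim (\<lambda>m. expsum p q X m i j U))"

end

theory Submission
  imports Defs
begin

definition ninv :: "nat set \<Rightarrow> nat set \<Rightarrow> nat" where
  "ninv S T = card {(s, t). s \<in> S \<and> t \<in> T \<and> t < s}"

lemma gsign_ninv: "gsign S T = (-1) ^ ninv S T"
  by (simp add: gsign_def ninv_def)

lemma ninv_Un1:
  assumes "finite S" "finite T" "finite W" "S \<inter> T = {}"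
  shows "ninv (S \<union> T) W = ninv S W + ninv T W"
proof -
  have e: "{(s, t). s \<in> S \<union> T \<and> t \<in> W \<and> t < s} =
        {(s, t). s \<in> S \<and> t \<in> W \<and> t < s} \<union> {(s, t). s \<in> T \<and> t \<in> W \<and> t < s}" by auto
  have f1: "finite {(s, t). s \<in> S \<and> t \<in> W \<and> t < s}"
    by (rule finite_subset[of _ "S \<times> W"]) (use assms in auto)
  have f2: "finite {(s, t). s \<in> T \<and> t \<in> W \<and> t < s}"
    by (rule finite_subset[of _ "T \<times> W"]) (use assms in auto)
  show ?thesis unfolding ninv_def e
    by (rule card_Un_disjoint[OF f1 f2]) (use assms in auto)
qed

lemma ninv_Un2:
  assumes "finite S" "finite T" "finite W" "T \<inter> W = {}"
  shows "ninv S (T \<union> W) = ninv S T + ninv S W"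
proof -
  have e: "{(s, t). s \<in> S \<and> t \<in> T \<union> W \<and> t < s} =
        {(s, t). s \<in> S \<and> t \<in> T \<and> t < s} \<union> {(s, t). s \<in> S \<and> t \<in> W \<and> t < s}" by auto
  have f1: "finite {(s, t). s \<in> S \<and> t \<in> T \<and> t < s}"
    by (rule finite_subset[of _ "S \<times> T"]) (use assms in auto)
  have f2: "finite {(s, t). s \<in> S \<and> t \<in> W \<and> t < s}"
    by (rule finite_subset[of _ "S \<times> W"]) (use assms in auto)
  show ?thesis unfolding ninv_def e
    by (rule card_Un_disjoint[OF f1 f2]) (use assms in auto)
qed

lemma gsign_cocycle:
  assumes "finite S" "finite T" "finite W" "S \<inter> T = {}" "S \<inter> W = {}" "T \<inter> W = {}"
  shows "gsign S T * gsign (S \<union> T) W = gsign S (T \<union> W) * gsign T W"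
  using assms by (simp add: gsign_ninv ninv_Un1 ninv_Un2 power_add)

lemma gsign_empty1[simp]: "gsign {} T = 1" by (simp add: gsign_def)
lemma gsign_empty2[simp]: "gsign S {} = 1" by (simp add: gsign_def)

lemma gsign_norm[simp]: "norm (gsign S T) = 1"
  by (simp add: gsign_def norm_power)

lemma gmult_inf: "infinite U \<Longrightarrow> gmult a b U = 0"
  by (simp add: gmult_def)

lemma gmult_fin: "finite U \<Longrightarrow> gmult a b U = (\<Sum>S\<in>Pow U. gsign S (U - S) * a S * b (U - S))"
  by (simp add: gmult_def)

lemma gmult_assoc: "gmult (gmult a b) c = gmult a (gmult b c)"
proof (rule ext)
  fix U show "gmult (gmult a b) c U = gmult a (gmult b c) U"
  proof (cases "finite U")
    case False thus ?thesis by (simp add: gmult_def)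
  next
    case True
    define g where "g R T = gsign R T * gsign (R \<union> T) (U - (R \<union> T)) * a R * b T * c (U - (R \<union> T))" for R T
    have "gmult (gmult a b) c U = (\<Sum>S\<in>Pow U. \<Sum>R\<in>{R\<in>Pow U. R \<subseteq> S}. g R (S - R))"
    proof -
      have "gmult (gmult a b) c U = (\<Sum>S\<in>Pow U. gsign S (U - S) * gmult a b S * c (U - S))"
        using True by (simp add: gmult_fin)
      also have "\<dots> = (\<Sum>S\<in>Pow U. \<Sum>R\<in>{R\<in>Pow U. R \<subseteq> S}. g R (S - R))"
      proof (rule sum.cong[OF refl])
        fix S assume S: "S \<in> Pow U"
        hence fS: "finite S" using True finite_subset by auto
        have P: "Pow S = {R\<in>Pow U. R \<subseteq> S}" using S by auto
        have "gsign S (U - S) * gmult a b S * c (U - S) =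
              (\<Sum>R\<in>Pow S. gsign S (U - S) * (gsign R (S - R) * a R * b (S - R)) * c (U - S))"
          using fS by (simp add: gmult_fin sum_distrib_left sum_distrib_right)
        also have "\<dots> = (\<Sum>R\<in>Pow S. g R (S - R))"
        proof (rule sum.cong[OF refl])
          fix R assume "R \<in> Pow S"
          hence "R \<union> (S - R) = S" by auto
          thus "gsign S (U - S) * (gsign R (S - R) * a R * b (S - R)) * c (U - S) = g R (S - R)"
            unfolding g_def by (simp add: ac_simps)
        qed
        finally show "gsign S (U - S) * gmult a b S * c (U - S) = (\<Sum>R\<in>{R\<in>Pow U. R \<subseteq> S}. g R (S - R))"
          using P by simp
      qed
      finally show ?thesis .
    qed
    also have "\<dots> = (\<Sum>R\<in>Pow U. \<Sum>S\<in>{S\<in>Pow U. R \<subseteq> S}. g R (S - R))"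
      by (rule sum.swap_restrict) (use True in auto)
    also have "\<dots> = (\<Sum>R\<in>Pow U. \<Sum>T\<in>Pow (U - R). g R T)"
    proof (rule sum.cong[OF refl])
      fix R assume R: "R \<in> Pow U"
      show "(\<Sum>S\<in>{S\<in>Pow U. R \<subseteq> S}. g R (S - R)) = (\<Sum>T\<in>Pow (U - R). g R T)"
        by (rule sum.reindex_bij_witness[where i="\<lambda>T. R \<union> T" and j="\<lambda>S. S - R"]) (use R in auto)
    qed
    also have "\<dots> = gmult a (gmult b c) U"
    proof -
      have "gmult a (gmult b c) U = (\<Sum>R\<in>Pow U. gsign R (U - R) * a R * gmult b c (U - R))"
        using True by (simp add: gmult_fin)
      also have "\<dots> = (\<Sum>R\<in>Pow U. \<Sum>T\<in>Pow (U - R). g R T)"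
      proof (rule sum.cong[OF refl])
        fix R assume R: "R \<in> Pow U"
        have fUR: "finite (U - R)" using True by auto
        have "gsign R (U - R) * a R * gmult b c (U - R) =
             (\<Sum>T\<in>Pow (U - R). gsign R (U - R) * a R * (gsign T (U - R - T) * b T * c (U - R - T)))"
          using fUR by (simp add: gmult_fin sum_distrib_left)
        also have "\<dots> = (\<Sum>T\<in>Pow (U - R). g R T)"
        proof (rule sum.cong[OF refl])
          fix T assume T: "T \<in> Pow (U - R)"
          have fR: "finite R" using R True finite_subset by auto
          have fT: "finite T" using T fUR finite_subset by auto
          have e1: "U - R - T = U - (R \<union> T)" by auto
          have e2: "T \<union> (U - (R \<union> T)) = U - R" using T by auto
          have cc: "gsign R T * gsign (R \<union> T) (U - (R \<union> T)) = gsign R (U - R) * gsign T (U - (R \<union> T))"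
            using gsign_cocycle[of R T "U - (R \<union> T)"] fR fT True T e2 by auto
          show "gsign R (U - R) * a R * (gsign T (U - R - T) * b T * c (U - R - T)) = g R T"
            unfolding g_def e1 using cc by (simp add: ac_simps)
        qed
        finally show "gsign R (U - R) * a R * gmult b c (U - R) = (\<Sum>T\<in>Pow (U - R). g R T)" .
      qed
      finally show ?thesis by simp
    qed
    finally show ?thesis .
  qed
qed

definition gfin :: "grass \<Rightarrow> bool" where
  "gfin a \<longleftrightarrow> (\<forall>U. infinite U \<longrightarrow> a U = 0)"

definition ghom :: "bool \<Rightarrow> grass \<Rightarrow> bool" where
  "ghom e a \<longleftrightarrow> a \<in> grass_elems \<and> (\<forall>S. even (card S) \<noteq> e \<longrightarrow> a S = 0)"

lemma grass_even_hom: "grass_even a = ghom True a"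
  by (auto simp: grass_even_def ghom_def)
lemma grass_odd_hom: "grass_odd a = ghom False a"
  by (auto simp: grass_odd_def ghom_def)

lemma ghom_gfin: "ghom e a \<Longrightarrow> gfin a"
  by (auto simp: ghom_def gfin_def grass_elems_def)

lemma gfin_gmult[simp]: "gfin (gmult a b)"
  by (simp add: gfin_def gmult_inf)

lemma gmult_add1: "gmult (\<lambda>U. a U + b U) c = (\<lambda>U. gmult a c U + gmult b c U)"
  by (rule ext) (simp add: gmult_def sum.distrib distrib_left distrib_right)

lemma gmult_sum1: "gmult (\<lambda>U. \<Sum>k\<in>K. f k U) c = (\<lambda>U. \<Sum>k\<in>K. gmult (f k) c U)"
proof (rule ext)
  fix U show "gmult (\<lambda>U. \<Sum>k\<in>K. f k U) c U = (\<Sum>k\<in>K. gmult (f k) c U)"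
  proof (cases "finite U")
    case True
    have "gmult (\<lambda>U. \<Sum>k\<in>K. f k U) c U = (\<Sum>S\<in>Pow U. \<Sum>k\<in>K. gsign S (U - S) * f k S * c (U - S))"
      unfolding gmult_fin[OF True] by (simp add: sum_distrib_left sum_distrib_right)
    also have "\<dots> = (\<Sum>k\<in>K. \<Sum>S\<in>Pow U. gsign S (U - S) * f k S * c (U - S))"
      by (rule sum.swap)
    finally show ?thesis by (simp add: gmult_fin[OF True])
  qed (simp add: gmult_inf)
qed

lemma gmult_sum2: "gmult c (\<lambda>U. \<Sum>k\<in>K. f k U) = (\<lambda>U. \<Sum>k\<in>K. gmult c (f k) U)"
proof (rule ext)
  fix U show "gmult c (\<lambda>U. \<Sum>k\<in>K. f k U) U = (\<Sum>k\<in>K. gmult c (f k) U)"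
  proof (cases "finite U")
    case True
    have "gmult c (\<lambda>U. \<Sum>k\<in>K. f k U) U = (\<Sum>S\<in>Pow U. \<Sum>k\<in>K. gsign S (U - S) * c S * f k (U - S))"
      unfolding gmult_fin[OF True] by (simp add: sum_distrib_left sum_distrib_right)
    also have "\<dots> = (\<Sum>k\<in>K. \<Sum>S\<in>Pow U. gsign S (U - S) * c S * f k (U - S))"
      by (rule sum.swap)
    finally show ?thesis by (simp add: gmult_fin[OF True])
  qed (simp add: gmult_inf)
qed

lemma gmult_scal1: "gmult (\<lambda>U. x * a U) b = (\<lambda>U. x * gmult a b U)"
  by (rule ext) (simp add: gmult_def sum_distrib_left mult_ac)

lemma gmult_scal2: "gmult a (\<lambda>U. x * b U) = (\<lambda>U. x * gmult a b U)"
  by (rule ext) (simp add: gmult_def sum_distrib_left mult_ac)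

lemma gmult_zero1[simp]: "gmult gzero b = gzero"
  by (rule ext) (auto simp: gmult_def gzero_def)
lemma gmult_zero2[simp]: "gmult b gzero = gzero"
  by (rule ext) (auto simp: gmult_def gzero_def)
lemma gmult_zero1'[simp]: "gmult (\<lambda>_. 0) b = gzero"
  by (rule ext) (auto simp: gmult_def gzero_def)
lemma gmult_zero2'[simp]: "gmult b (\<lambda>_. 0) = gzero"
  by (rule ext) (auto simp: gmult_def gzero_def)

lemma gmult_empty[simp]: "gmult a b {} = a {} * b {}"
  by (simp add: gmult_def)

lemma gone_mult: "gfin a \<Longrightarrow> gmult gone a = a"
proof (rule ext)
  fix U assume g: "gfin a"
  show "gmult gone a U = a U"
  proof (cases "finite U")
    case True
    have "gmult gone a U = (\<Sum>S\<in>Pow U. if S = {} then a U else 0)"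
      using True unfolding gmult_fin[OF True] gone_def by (intro sum.cong) auto
    also have "\<dots> = a U" using True by (simp add: sum.delta)
    finally show ?thesis .
  qed (use g in \<open>auto simp: gfin_def gmult_inf\<close>)
qed

lemma mult_gone: "gfin a \<Longrightarrow> gmult a gone = a"
proof (rule ext)
  fix U assume g: "gfin a"
  show "gmult a gone U = a U"
  proof (cases "finite U")
    case True
    have "gmult a gone U = (\<Sum>S\<in>Pow U. if S = U then a U else 0)"
      using True unfolding gmult_fin[OF True] gone_def by (intro sum.cong) auto
    also have "\<dots> = a U" using True by (simp add: sum.delta)
    finally show ?thesis .
  qed (use g in \<open>auto simp: gfin_def gmult_inf\<close>)
qed

lemma gmult_nz:
  assumes "gmult a b U \<noteq> 0"
  shows "finite U \<and> (\<exists>S\<subseteq>U. a S \<noteq> 0 \<and> b (U - S) \<noteq> 0)"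
proof -
  have f: "finite U" using assms gmult_inf by blast
  from assms f have "(\<Sum>S\<in>Pow U. gsign S (U - S) * a S * b (U - S)) \<noteq> 0" by (simp add: gmult_fin)
  then obtain S where "S \<in> Pow U" "gsign S (U - S) * a S * b (U - S) \<noteq> 0"
    using sum.not_neutral_contains_not_neutral by blast
  thus ?thesis using f by auto
qed

lemma ghom_gzero[simp]: "ghom e gzero"
  by (auto simp: ghom_def grass_elems_def gzero_def)
lemma ghom_zero'[simp]: "ghom e (\<lambda>_. 0)"
  by (auto simp: ghom_def grass_elems_def)

lemma ghom_gone[simp]: "ghom True gone"
proof -
  have "{S. gone S \<noteq> 0} \<subseteq> {{}}" by (auto simp: gone_def)
  hence "finite {S. gone S \<noteq> 0}" using finite_subset by blast
  thus ?thesis by (auto simp: ghom_def grass_elems_def gone_def)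
qed

lemma ghom_add:
  assumes "ghom e a" "ghom e b" shows "ghom e (\<lambda>U. a U + b U)"
proof -
  have A: "finite {S. a S \<noteq> 0}" "\<forall>S. a S \<noteq> 0 \<longrightarrow> finite S" "\<forall>S. even (card S) \<noteq> e \<longrightarrow> a S = 0"
    using assms(1) unfolding ghom_def grass_elems_def by blast+
  have B: "finite {S. b S \<noteq> 0}" "\<forall>S. b S \<noteq> 0 \<longrightarrow> finite S" "\<forall>S. even (card S) \<noteq> e \<longrightarrow> b S = 0"
    using assms(2) unfolding ghom_def grass_elems_def by blast+
  have "{S. a S + b S \<noteq> 0} \<subseteq> {S. a S \<noteq> 0} \<union> {S. b S \<noteq> 0}" by auto
  moreover have "finite ({S. a S \<noteq> 0} \<union> {S. b S \<noteq> 0})" using A B by blast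
  ultimately have F: "finite {S. a S + b S \<noteq> 0}" by (rule finite_subset)
  have G: "\<forall>S. a S + b S \<noteq> 0 \<longrightarrow> finite S" using A(2) B(2) by (metis add.right_neutral add_0)
  have H: "\<forall>S. even (card S) \<noteq> e \<longrightarrow> a S + b S = 0" using A(3) B(3) by simp
  show ?thesis unfolding ghom_def grass_elems_def using F G H by blast
qed

lemma ghom_scal:
  assumes "ghom e a" shows "ghom e (\<lambda>U. x * a U)"
proof -
  have A: "finite {S. a S \<noteq> 0}" "\<forall>S. a S \<noteq> 0 \<longrightarrow> finite S" "\<forall>S. even (card S) \<noteq> e \<longrightarrow> a S = 0"
    using assms(1) unfolding ghom_def grass_elems_def by blast+
  have "{S. x * a S \<noteq> 0} \<subseteq> {S. a S \<noteq> 0}" by auto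
  hence F: "finite {S. x * a S \<noteq> 0}" using A(1) by (rule finite_subset)
  have G: "\<forall>S. x * a S \<noteq> 0 \<longrightarrow> finite S" using A(2) by simp
  have H: "\<forall>S. even (card S) \<noteq> e \<longrightarrow> x * a S = 0" using A(3) by simp
  show ?thesis unfolding ghom_def grass_elems_def using F G H by blast
qed

lemma ghom_sum:
  assumes "\<And>k. k \<in> K \<Longrightarrow> ghom e (f k)" shows "ghom e (\<lambda>U. \<Sum>k\<in>K. f k U)"
  using assms
proof (induction K rule: infinite_finite_induct)
  case (insert x F)
  have "ghom e (\<lambda>U. f x U + (\<Sum>k\<in>F. f k U))"
    by (rule ghom_add) (use insert in auto)
  thus ?case using insert by simp
qed auto

lemma ghom_gmult:
  assumes a: "ghom e a" and b: "ghom f b" shows "ghom (e = f) (gmult a b)"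
proof -
  let ?A = "{S. a S \<noteq> 0}" and ?B = "{S. b S \<noteq> 0}"
  have fA: "finite ?A" and fB: "finite ?B" using a b by (auto simp: ghom_def grass_elems_def)
  have sub: "{U. gmult a b U \<noteq> 0} \<subseteq> (\<lambda>(S, T). S \<union> T) ` (?A \<times> ?B)"
  proof
    fix U assume "U \<in> {U. gmult a b U \<noteq> 0}"
    then obtain S where "S \<subseteq> U" "a S \<noteq> 0" "b (U - S) \<noteq> 0" using gmult_nz by blast
    thus "U \<in> (\<lambda>(S, T). S \<union> T) ` (?A \<times> ?B)"
      by (intro image_eqI[of _ _ "(S, U - S)"]) auto
  qed
  have fin: "finite {U. gmult a b U \<noteq> 0}"
    by (rule finite_subset[OF sub]) (use fA fB in auto)
  have par: "gmult a b U = 0" if "even (card U) \<noteq> (e = f)" for U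
  proof (rule ccontr)
    assume "gmult a b U \<noteq> 0"
    then obtain S where S: "finite U" "S \<subseteq> U" "a S \<noteq> 0" "b (U - S) \<noteq> 0" using gmult_nz by blast
    have "even (card S) = e" "even (card (U - S)) = f" using a b S by (auto simp: ghom_def)
    moreover have "card U = card S + card (U - S)"
    proof -
      have "finite S" using S finite_subset by blast
      hence "card (U - S) = card U - card S" using S card_Diff_subset by blast
      moreover have "card S \<le> card U" using S card_mono by blast
      ultimately show ?thesis by simp
    qed
    ultimately show False using that by auto
  qed
  have "\<forall>S. gmult a b S \<noteq> 0 \<longrightarrow> finite S" using gmult_nz by blast
  thus ?thesis using fin par unfolding ghom_def grass_elems_def by blast
qed

definition mgood :: "nat \<Rightarrow> gmat \<Rightarrow> bool" where
  "mgood n A \<longleftrightarrow> (\<forall>i j. \<not> (i < n \<and> j < n) \<longrightarrow> A i j = gzero) \<and> (\<forall>i j. gfin (A i j))"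

definition madd :: "gmat \<Rightarrow> gmat \<Rightarrow> gmat" where
  "madd A B = (\<lambda>i j U. A i j U + B i j U)"

definition mscal :: "complex \<Rightarrow> gmat \<Rightarrow> gmat" where
  "mscal x A = (\<lambda>i j U. x * A i j U)"

lemma mm_entry: "i < n \<Longrightarrow> j < n \<Longrightarrow> gmat_mult n A B i j = (\<lambda>U. \<Sum>k<n. gmult (A i k) (B k j) U)"
  by (simp add: gmat_mult_def)

lemma mm_out: "\<not> (i < n \<and> j < n) \<Longrightarrow> gmat_mult n A B i j = gzero"
  unfolding gmat_mult_def by auto

lemma gfin_gzero[simp]: "gfin gzero" by (simp add: gfin_def gzero_def)
lemma gfin_gone[simp]: "gfin gone" by (auto simp: gfin_def gone_def)

lemma gfin_sum: "(\<And>k. k \<in> K \<Longrightarrow> gfin (f k)) \<Longrightarrow> gfin (\<lambda>U. \<Sum>k\<in>K. f k U)"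
  by (simp add: gfin_def)

lemma mgood_mult[simp]: "mgood n (gmat_mult n A B)"
  unfolding mgood_def
proof (intro conjI allI impI)
  fix i j assume "\<not> (i < n \<and> j < n)" thus "gmat_mult n A B i j = gzero" by (simp add: mm_out)
next
  fix i j show "gfin (gmat_mult n A B i j)"
    by (cases "i < n \<and> j < n") (simp_all add: mm_out mm_entry gfin_def gmult_inf gzero_def)
qed

lemma mgood_one[simp]: "mgood n (gmat_one n)"
  unfolding mgood_def by (auto simp: gmat_one_def)

lemma mm_assoc: "gmat_mult n (gmat_mult n A B) C = gmat_mult n A (gmat_mult n B C)"
proof (intro ext)
  fix i j U
  show "gmat_mult n (gmat_mult n A B) C i j U = gmat_mult n A (gmat_mult n B C) i j U"
  proof (cases "i < n \<and> j < n")
    case True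
    have "gmat_mult n (gmat_mult n A B) C i j U = (\<Sum>k<n. gmult (\<lambda>U. \<Sum>l<n. gmult (A i l) (B l k) U) (C k j) U)"
      using True by (simp add: mm_entry)
    also have "\<dots> = (\<Sum>k<n. \<Sum>l<n. gmult (A i l) (gmult (B l k) (C k j)) U)"
      by (simp add: gmult_sum1 gmult_assoc)
    also have "\<dots> = (\<Sum>l<n. \<Sum>k<n. gmult (A i l) (gmult (B l k) (C k j)) U)"
      by (rule sum.swap)
    also have "\<dots> = gmat_mult n A (gmat_mult n B C) i j U"
      using True by (simp add: mm_entry gmult_sum2)
    finally show ?thesis .
  qed (simp add: mm_out)
qed

lemma one_mm: "mgood n A \<Longrightarrow> gmat_mult n (gmat_one n) A = A"
proof (intro ext)
  fix i j U assume g: "mgood n A"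
  show "gmat_mult n (gmat_one n) A i j U = A i j U"
  proof (cases "i < n \<and> j < n")
    case True
    have "gmat_mult n (gmat_one n) A i j U = (\<Sum>k<n. if k = i then gmult gone (A k j) U else 0)"
      using True unfolding mm_entry[OF conjunct1[OF True] conjunct2[OF True]]
      by (intro sum.cong) (auto simp: gmat_one_def gzero_def)
    also have "\<dots> = gmult gone (A i j) U" using True by (simp add: sum.delta)
    also have "\<dots> = A i j U" using g by (simp add: mgood_def gone_mult)
    finally show ?thesis .
  qed (use g in \<open>auto simp: mm_out mgood_def\<close>)
qed

lemma mm_one: "mgood n A \<Longrightarrow> gmat_mult n A (gmat_one n) = A"
proof (intro ext)
  fix i j U assume g: "mgood n A"
  show "gmat_mult n A (gmat_one n) i j U = A i j U"
  proof (cases "i < n \<and> j < n")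
    case True
    have "gmat_mult n A (gmat_one n) i j U = (\<Sum>k<n. if k = j then gmult (A i k) gone U else 0)"
      using True unfolding mm_entry[OF conjunct1[OF True] conjunct2[OF True]]
      by (intro sum.cong) (auto simp: gmat_one_def gzero_def)
    also have "\<dots> = gmult (A i j) gone U" using True by (simp add: sum.delta)
    also have "\<dots> = A i j U" using g by (simp add: mgood_def mult_gone)
    finally show ?thesis .
  qed (use g in \<open>auto simp: mm_out mgood_def\<close>)
qed

lemma mm_madd1: "gmat_mult n (madd A B) C = madd (gmat_mult n A C) (gmat_mult n B C)"
proof (intro ext)
  fix i j U
  show "gmat_mult n (madd A B) C i j U = madd (gmat_mult n A C) (gmat_mult n B C) i j U"
  proof (cases "i < n \<and> j < n")
    case True
    have e: "madd A B i k = (\<lambda>U. A i k U + B i k U)" for k by (simp add: madd_def)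
    show ?thesis using True by (simp add: mm_entry madd_def e gmult_add1 sum.distrib)
  qed (simp add: mm_out madd_def gzero_def)
qed

lemma mm_mscal1: "gmat_mult n (mscal x A) C = mscal x (gmat_mult n A C)"
proof (intro ext)
  fix i j U
  show "gmat_mult n (mscal x A) C i j U = mscal x (gmat_mult n A C) i j U"
  proof (cases "i < n \<and> j < n")
    case True
    have e: "mscal x A i k = (\<lambda>U. x * A i k U)" for k by (simp add: mscal_def)
    show ?thesis using True by (simp add: mm_entry mscal_def e gmult_scal1 sum_distrib_left)
  qed (simp add: mm_out mscal_def gzero_def)
qed

lemma mm_mscal2: "gmat_mult n A (mscal x C) = mscal x (gmat_mult n A C)"
proof (intro ext)
  fix i j U
  show "gmat_mult n A (mscal x C) i j U = mscal x (gmat_mult n A C) i j U"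
  proof (cases "i < n \<and> j < n")
    case True
    have e: "mscal x C k j = (\<lambda>U. x * C k j U)" for k by (simp add: mscal_def)
    show ?thesis using True by (simp add: mm_entry mscal_def e gmult_scal2 sum_distrib_left)
  qed (simp add: mm_out mscal_def gzero_def)
qed

lemma mm_body: "gmat_mult n A B i j {} = (if i < n \<and> j < n then (\<Sum>k<n. A i k {} * B k j {}) else 0)"
  by (simp add: gmat_mult_def gzero_def)

lemma pow_0[simp]: "gmat_pow n X 0 = gmat_one n"
  by (simp add: gmat_pow_def)

lemma pow_Suc: "gmat_pow n X (Suc k) = gmat_mult n X (gmat_pow n X k)"
  by (simp add: gmat_pow_def)

lemma mgood_pow[simp]: "mgood n (gmat_pow n X k)"
  by (cases k) (simp_all add: pow_Suc)

lemma pow_add: "gmat_mult n (gmat_pow n X a) (gmat_pow n X b) = gmat_pow n X (a + b)"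
  by (induction a) (simp_all add: one_mm pow_Suc mm_assoc)

lemma mgood_madd: "mgood n A \<Longrightarrow> mgood n B \<Longrightarrow> mgood n (madd A B)"
  by (auto simp: mgood_def madd_def gfin_def gzero_def fun_eq_iff)

lemma mgood_mscal: "mgood n A \<Longrightarrow> mgood n (mscal x A)"
  by (auto simp: mgood_def mscal_def gfin_def gzero_def fun_eq_iff)

lemma pow_mscal: "gmat_pow n (mscal x X) k = mscal (x ^ k) (gmat_pow n X k)"
proof (induction k)
  case 0 show ?case by (simp add: mscal_def)
next
  case (Suc k)
  have "gmat_pow n (mscal x X) (Suc k) = mscal (x ^ k) (mscal x (gmat_pow n X (Suc k)))"
    using Suc by (simp only: pow_Suc mm_mscal1 mm_mscal2)
  thus ?case by (simp add: mscal_def mult_ac)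
qed

section \<open>Parity of matrices\<close>

definition ipar :: "nat \<Rightarrow> nat \<Rightarrow> nat \<Rightarrow> bool" where
  "ipar p i j \<longleftrightarrow> (idx_odd p i = idx_odd p j)"

lemma even_gmat_iff:
  "even_gmat p q A \<longleftrightarrow> (\<forall>i j. \<not> (i < p + q \<and> j < p + q) \<longrightarrow> A i j = gzero)
      \<and> (\<forall>i j. i < p + q \<and> j < p + q \<longrightarrow> ghom (ipar p i j) (A i j))"
proof -
  have h: "\<And>c a. (if c then ghom True a else ghom False a) = ghom c a" by simp
  show ?thesis
    unfolding even_gmat_def ipar_def grass_even_hom grass_odd_hom h
    by (metis (full_types))
qed

lemma even_gmat_good: "even_gmat p q A \<Longrightarrow> mgood (p + q) A"
  unfolding even_gmat_iff mgood_def by (metis gfin_gzero ghom_gfin)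

lemma even_gmat_hom: "even_gmat p q A \<Longrightarrow> i < p + q \<Longrightarrow> j < p + q \<Longrightarrow> ghom (ipar p i j) (A i j)"
  unfolding even_gmat_iff by blast

lemma even_gmat_out: "even_gmat p q A \<Longrightarrow> \<not> (i < p + q \<and> j < p + q) \<Longrightarrow> A i j = gzero"
  unfolding even_gmat_iff by blast

lemma even_gmat_mult:
  assumes A: "even_gmat p q A" and B: "even_gmat p q B"
  shows "even_gmat p q (gmat_mult (p + q) A B)"
  unfolding even_gmat_iff
proof (intro conjI allI impI)
  fix i j assume "\<not> (i < p + q \<and> j < p + q)"
  thus "gmat_mult (p + q) A B i j = gzero" by (simp add: mm_out)
next
  fix i j assume ij: "i < p + q \<and> j < p + q"
  have "ghom (ipar p i j) (\<lambda>U. \<Sum>k<p+q. gmult (A i k) (B k j) U)"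
  proof (rule ghom_sum)
    fix k assume "k \<in> {..<p+q}"
    hence h: "ghom (ipar p i k) (A i k)" "ghom (ipar p k j) (B k j)"
      using ij even_gmat_hom[OF A] even_gmat_hom[OF B] by auto
    have "ghom (ipar p i k = ipar p k j) (gmult (A i k) (B k j))" by (rule ghom_gmult[OF h])
    moreover have "(ipar p i k = ipar p k j) = ipar p i j" by (auto simp: ipar_def)
    ultimately show "ghom (ipar p i j) (gmult (A i k) (B k j))" by simp
  qed
  thus "ghom (ipar p i j) (gmat_mult (p + q) A B i j)" using ij by (simp add: mm_entry)
qed

lemma even_gmat_one: "even_gmat p q (gmat_one (p + q))"
  unfolding even_gmat_iff by (auto simp: gmat_one_def ipar_def)

lemma even_gmat_pow: "even_gmat p q X \<Longrightarrow> even_gmat p q (gmat_pow (p + q) X k)"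
  by (induction k) (simp_all add: pow_Suc even_gmat_one even_gmat_mult)

lemma GL_group: "group (GLgrp p q)"
proof (rule groupI)
  let ?n = "p + q"
  fix x y assume x: "x \<in> carrier (GLgrp p q)" and y: "y \<in> carrier (GLgrp p q)"
  from x obtain x' where x': "even_gmat p q x" "even_gmat p q x'" "gmat_mult ?n x x' = gmat_one ?n"
      "gmat_mult ?n x' x = gmat_one ?n" by (auto simp: GLgrp_def GLset_def)
  from y obtain y' where y': "even_gmat p q y" "even_gmat p q y'" "gmat_mult ?n y y' = gmat_one ?n"
      "gmat_mult ?n y' y = gmat_one ?n" by (auto simp: GLgrp_def GLset_def)
  have g: "mgood ?n x'" "mgood ?n y" using x' y' even_gmat_good by auto
  have "gmat_mult ?n (gmat_mult ?n x y) (gmat_mult ?n y' x') = gmat_one ?n"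
    by (simp add: mm_assoc, simp add: mm_assoc[symmetric] y' one_mm g x')
  moreover have "gmat_mult ?n (gmat_mult ?n y' x') (gmat_mult ?n x y) = gmat_one ?n"
    by (simp add: mm_assoc, simp add: mm_assoc[symmetric] y' one_mm g x')
  ultimately show "x \<otimes>\<^bsub>GLgrp p q\<^esub> y \<in> carrier (GLgrp p q)"
    using x' y' by (auto simp: GLgrp_def GLset_def even_gmat_mult intro!: exI[of _ "gmat_mult ?n y' x'"])
next
  show "\<one>\<^bsub>GLgrp p q\<^esub> \<in> carrier (GLgrp p q)"
    using one_mm[OF mgood_one] by (auto simp: GLgrp_def GLset_def even_gmat_one intro!: exI[of _ "gmat_one (p+q)"])
next
  fix x y z
  show "x \<otimes>\<^bsub>GLgrp p q\<^esub> y \<otimes>\<^bsub>GLgrp p q\<^esub> z = x \<otimes>\<^bsub>GLgrp p q\<^esub> (y \<otimes>\<^bsub>GLgrp p q\<^esub> z)"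
    by (simp add: GLgrp_def mm_assoc)
next
  fix x assume "x \<in> carrier (GLgrp p q)"
  thus "\<one>\<^bsub>GLgrp p q\<^esub> \<otimes>\<^bsub>GLgrp p q\<^esub> x = x"
    by (auto simp: GLgrp_def GLset_def one_mm even_gmat_good)
next
  fix x assume x: "x \<in> carrier (GLgrp p q)"
  from x obtain x' where x': "even_gmat p q x" "even_gmat p q x'" "gmat_mult (p+q) x x' = gmat_one (p+q)"
      "gmat_mult (p+q) x' x = gmat_one (p+q)" by (auto simp: GLgrp_def GLset_def)
  hence "x' \<in> carrier (GLgrp p q)" by (auto simp: GLgrp_def GLset_def)
  thus "\<exists>y\<in>carrier (GLgrp p q). y \<otimes>\<^bsub>GLgrp p q\<^esub> x = \<one>\<^bsub>GLgrp p q\<^esub>"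
    using x' by (auto simp: GLgrp_def)
qed

lemma gmult_norm_le:
  assumes "finite V" "\<And>T. T \<subseteq> V \<Longrightarrow> norm (b T) \<le> B"
  shows "norm (gmult a b V) \<le> (\<Sum>S\<in>Pow V. norm (a S)) * B"
proof -
  have "norm (gmult a b V) \<le> (\<Sum>S\<in>Pow V. norm (gsign S (V - S) * a S * b (V - S)))"
    unfolding gmult_fin[OF assms(1)] by (rule norm_sum)
  also have "\<dots> \<le> (\<Sum>S\<in>Pow V. norm (a S) * B)"
  proof (rule sum_mono)
    fix S assume "S \<in> Pow V"
    have "norm (gsign S (V - S) * a S * b (V - S)) = norm (a S) * norm (b (V - S))"
      by (simp add: norm_mult)
    also have "\<dots> \<le> norm (a S) * B" by (rule mult_left_mono) (use assms(2) in auto)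
    finally show "norm (gsign S (V - S) * a S * b (V - S)) \<le> norm (a S) * B" .
  qed
  also have "\<dots> = (\<Sum>S\<in>Pow V. norm (a S)) * B" by (simp add: sum_distrib_right)
  finally show ?thesis .
qed

lemma pow_bound:
  fixes n :: nat and X :: gmat and U :: "nat set"
  assumes U: "finite U"
  defines "C \<equiv> (\<Sum>i<n. \<Sum>j<n. \<Sum>S\<in>Pow U. norm (X i j S)) + 1"
  shows "V \<subseteq> U \<Longrightarrow> norm (gmat_pow n X k i j V) \<le> C ^ k"
proof (induction k arbitrary: i j V)
  case 0
  show ?case by (simp add: gmat_one_def gone_def gzero_def)
next
  case (Suc k)
  have C0: "C \<ge> 1" unfolding C_def by (simp add: sum_nonneg)
  show ?case
  proof (cases "i < n \<and> j < n")
    case False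
    thus ?thesis using C0 by (simp add: pow_Suc mm_out gzero_def)
  next
    case True
    have fV: "finite V" using Suc.prems U finite_subset by blast
    have "norm (gmat_pow n X (Suc k) i j V) = norm (\<Sum>l<n. gmult (X i l) (gmat_pow n X k l j) V)"
      using True by (simp add: pow_Suc mm_entry)
    also have "\<dots> \<le> (\<Sum>l<n. norm (gmult (X i l) (gmat_pow n X k l j) V))" by (rule norm_sum)
    also have "\<dots> \<le> (\<Sum>l<n. (\<Sum>S\<in>Pow U. norm (X i l S)) * C ^ k)"
    proof (rule sum_mono)
      fix l assume "l \<in> {..<n}"
      have "norm (gmult (X i l) (gmat_pow n X k l j) V) \<le> (\<Sum>S\<in>Pow V. norm (X i l S)) * C ^ k"
        by (rule gmult_norm_le[OF fV]) (use Suc.IH Suc.prems in auto)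
      also have "\<dots> \<le> (\<Sum>S\<in>Pow U. norm (X i l S)) * C ^ k"
        by (rule mult_right_mono, rule sum_mono2) (use U Suc.prems C0 in auto)
      finally show "norm (gmult (X i l) (gmat_pow n X k l j) V) \<le> (\<Sum>S\<in>Pow U. norm (X i l S)) * C ^ k" .
    qed
    also have "\<dots> = (\<Sum>l<n. \<Sum>S\<in>Pow U. norm (X i l S)) * C ^ k" by (simp add: sum_distrib_right)
    also have "\<dots> \<le> C * C ^ k"
    proof (rule mult_right_mono)
      have "(\<Sum>l<n. \<Sum>S\<in>Pow U. norm (X i l S)) \<le> (\<Sum>i<n. \<Sum>l<n. \<Sum>S\<in>Pow U. norm (X i l S))"
        by (rule member_le_sum[where f="\<lambda>i. \<Sum>l<n. \<Sum>S\<in>Pow U. norm (X i l S)"])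
           (use True in \<open>auto intro!: sum_nonneg\<close>)
      thus "(\<Sum>l<n. \<Sum>S\<in>Pow U. norm (X i l S)) \<le> C" unfolding C_def by simp
    qed (use C0 in simp)
    finally show ?thesis by simp
  qed
qed

lemma pow_inf: "infinite U \<Longrightarrow> gmat_pow n X k i j U = 0"
  using mgood_pow[of n X k] unfolding mgood_def gfin_def by blast

lemma exp_summable:
  "summable (\<lambda>k. norm (gmat_pow n X k i j U / of_nat (fact k)))"
proof (cases "finite U")
  case True
  define C where "C = (\<Sum>i<n. \<Sum>j<n. \<Sum>S\<in>Pow U. norm (X i j S)) + 1"
  show ?thesis
  proof (rule summable_comparison_test)
    show "\<exists>N. \<forall>k\<ge>N. norm (norm (gmat_pow n X k i j U / of_nat (fact k))) \<le> inverse (fact k) * C ^ k"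
    proof (intro exI allI impI)
      fix k :: nat
      have "norm (gmat_pow n X k i j U) \<le> C ^ k" unfolding C_def by (rule pow_bound[OF True]) simp
      hence "norm (gmat_pow n X k i j U) / fact k \<le> C ^ k / fact k"
        by (simp add: divide_right_mono)
      thus "norm (norm (gmat_pow n X k i j U / of_nat (fact k))) \<le> inverse (fact k) * C ^ k"
        by (simp add: norm_divide field_simps)
    qed
    show "summable (\<lambda>k. inverse (fact k) * C ^ k)" by (rule summable_exp)
  qed
next
  case False thus ?thesis by (simp add: pow_inf)
qed

lemma exp_summable': "summable (\<lambda>k. gmat_pow n X k i j U / of_nat (fact k))"
  by (rule summable_norm_cancel[OF exp_summable])

lemma expsum_conv:
  "(\<lambda>m. expsum p q X m i j U) \<longlonglongrightarrow> (\<Sum>k. gmat_pow (p+q) X k i j U / of_nat (fact k))"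
  unfolding expsum_def by (rule summable_LIMSEQ[OF exp_summable'])

lemma expsum_convergent: "convergent (\<lambda>m. expsum p q X m i j U)"
  using expsum_conv convergentI by blast

lemma gexp_eq: "gexp p q X i j U = (\<Sum>k. gmat_pow (p+q) X k i j U / of_nat (fact k))"
  unfolding gexp_def using expsum_conv limI by blast

lemma gexp_sums: "(\<lambda>k. gmat_pow (p+q) X k i j U / of_nat (fact k)) sums gexp p q X i j U"
  unfolding gexp_eq using exp_summable' summable_sums by blast

lemma binom_alt:
  "(\<Sum>a\<le>s. (-1) ^ (s - a) / (fact a * fact (s - a)) :: complex) = (if s = 0 then 1 else 0)"
proof -
  have "(0::complex) ^ s = (1 + (-1)) ^ s" by simp
  also have "\<dots> = (\<Sum>a\<le>s. of_nat (s choose a) * 1 ^ a * (-1) ^ (s - a))" by (rule binomial_ring)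
  also have "\<dots> = (\<Sum>a\<le>s. fact s * ((-1) ^ (s - a) / (fact a * fact (s - a))))"
    by (intro sum.cong refl) (simp add: binomial_fact)
  also have "\<dots> = fact s * (\<Sum>a\<le>s. (-1) ^ (s - a) / (fact a * fact (s - a)))"
    by (simp add: sum_distrib_left)
  finally have "(\<Sum>a\<le>s. (-1) ^ (s - a) / (fact a * fact (s - a)) :: complex) = 0 ^ s / fact s"
    by (simp add: field_simps)
  thus ?thesis by simp
qed

lemma mm_entry_fin:
  assumes "i < n" "j < n" "finite U"
  shows "gmat_mult n A B i j U = (\<Sum>k<n. \<Sum>S\<in>Pow U. gsign S (U - S) * A i k S * B k j (U - S))"
  using assms by (simp add: mm_entry gmult_fin)

lemma pow_neg_mult:
  "gmat_mult n (gmat_pow n X a) (gmat_pow n (mscal (-1) X) b) = mscal ((-1) ^ b) (gmat_pow n X (a + b))"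
  by (simp add: pow_mscal mm_mscal2 pow_add)

lemma gexp_inv:
  "gmat_mult (p + q) (gexp p q X) (gexp p q (mscal (-1) X)) = gmat_one (p + q)"
proof (intro ext)
  fix i j U
  let ?n = "p + q"
  define Y where "Y = mscal (-1) X"
  show "gmat_mult ?n (gexp p q X) (gexp p q (mscal (-1) X)) i j U = gmat_one ?n i j U"
  proof (cases "i < ?n \<and> j < ?n \<and> finite U")
    case False
    thus ?thesis
    proof (cases "i < ?n \<and> j < ?n")
      case True
      hence "infinite U" using False by blast
      moreover have "U \<noteq> {}" using calculation by auto
      ultimately show ?thesis using True by (simp add: mm_entry gmult_inf gmat_one_def gone_def gzero_def)
    qed (auto simp: mm_out gmat_one_def)
  next
    case True
    hence ij: "i < ?n" "j < ?n" and fU: "finite U" by auto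
    define f where "f k S a = gmat_pow ?n X a i k S / of_nat (fact a)" for k S a
    define g where "g k S b = gmat_pow ?n Y b k j (U - S) / of_nat (fact b)" for k S b
    define T where "T s = (\<Sum>k<?n. \<Sum>S\<in>Pow U. gsign S (U - S) * (\<Sum>a\<le>s. f k S a * g k S (s - a)))" for s
    have cp: "(\<lambda>s. \<Sum>a\<le>s. f k S a * g k S (s - a)) sums (gexp p q X i k S * gexp p q Y k j (U - S))" for k S
    proof -
      have "(\<lambda>s. \<Sum>a\<le>s. f k S a * g k S (s - a)) sums ((\<Sum>a. f k S a) * (\<Sum>b. g k S b))"
        unfolding f_def g_def by (rule Cauchy_product_sums) (rule exp_summable)+
      thus ?thesis by (simp add: f_def g_def gexp_eq)
    qed
    have s1: "T sums (\<Sum>k<?n. \<Sum>S\<in>Pow U. gsign S (U - S) * (gexp p q X i k S * gexp p q Y k j (U - S)))"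
      unfolding T_def
      by (intro sums_sum sums_mult cp)
    have s2: "(\<Sum>k<?n. \<Sum>S\<in>Pow U. gsign S (U - S) * (gexp p q X i k S * gexp p q Y k j (U - S)))
        = gmat_mult ?n (gexp p q X) (gexp p q Y) i j U"
      using ij fU by (simp add: mm_entry_fin mult.assoc)
    have Ts: "T s = (if s = 0 then gmat_one ?n i j U else 0)" for s
    proof -
      define c where "c a = 1 / (of_nat (fact a) * of_nat (fact (s - a)) :: complex)" for a
      have "T s = (\<Sum>k<?n. \<Sum>S\<in>Pow U. \<Sum>a\<le>s. gsign S (U - S) * (f k S a * g k S (s - a)))"
        unfolding T_def by (simp add: sum_distrib_left)
      also have "\<dots> = (\<Sum>k<?n. \<Sum>a\<le>s. \<Sum>S\<in>Pow U. gsign S (U - S) * (f k S a * g k S (s - a)))"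
        by (rule sum.cong[OF refl], rule sum.swap)
      also have "\<dots> = (\<Sum>a\<le>s. \<Sum>k<?n. \<Sum>S\<in>Pow U. gsign S (U - S) * (f k S a * g k S (s - a)))"
        by (rule sum.swap)
      also have "\<dots> = (\<Sum>a\<le>s. c a * gmat_mult ?n (gmat_pow ?n X a) (gmat_pow ?n Y (s - a)) i j U)"
      proof (rule sum.cong[OF refl])
        fix a assume "a \<in> {..s}"
        have "(\<Sum>k<?n. \<Sum>S\<in>Pow U. gsign S (U - S) * (f k S a * g k S (s - a))) =
              (\<Sum>k<?n. \<Sum>S\<in>Pow U. c a * (gsign S (U - S) * gmat_pow ?n X a i k S * gmat_pow ?n Y (s - a) k j (U - S)))"
          by (intro sum.cong refl) (simp add: f_def g_def c_def)
        also have "\<dots> = c a * gmat_mult ?n (gmat_pow ?n X a) (gmat_pow ?n Y (s - a)) i j U"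
          using ij fU by (simp add: mm_entry_fin sum_distrib_left)
        finally show "(\<Sum>k<?n. \<Sum>S\<in>Pow U. gsign S (U - S) * (f k S a * g k S (s - a))) =
              c a * gmat_mult ?n (gmat_pow ?n X a) (gmat_pow ?n Y (s - a)) i j U" .
      qed
      also have "\<dots> = (\<Sum>a\<le>s. gmat_pow ?n X s i j U * ((-1) ^ (s - a) / (fact a * fact (s - a))))"
      proof (rule sum.cong[OF refl])
        fix a assume "a \<in> {..s}"
        hence "a + (s - a) = s" by simp
        thus "c a * gmat_mult ?n (gmat_pow ?n X a) (gmat_pow ?n Y (s - a)) i j U =
              gmat_pow ?n X s i j U * ((-1) ^ (s - a) / (fact a * fact (s - a)))"
          unfolding Y_def pow_neg_mult by (simp add: mscal_def c_def)
      qed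
      also have "\<dots> = gmat_pow ?n X s i j U * (\<Sum>a\<le>s. (-1) ^ (s - a) / (fact a * fact (s - a)))"
        by (simp only: sum_distrib_left)
      also have "\<dots> = gmat_pow ?n X s i j U * (if s = 0 then 1 else 0)"
        by (simp only: binom_alt)
      finally show ?thesis by simp
    qed
    have "(\<lambda>s. if s = 0 then gmat_one ?n i j U else 0) sums gmat_one ?n i j U"
      using sums_single[of 0 "\<lambda>_. gmat_one ?n i j U"] by simp
    moreover have "T = (\<lambda>s. if s = 0 then gmat_one ?n i j U else 0)" by (rule ext) (rule Ts)
    ultimately have "T sums gmat_one ?n i j U" by simp
    with s1 s2 show ?thesis unfolding Y_def using sums_unique2 by metis
  qed
qed

section \<open>Evenness of the exponential\<close>

lemma pow_supp:
  "gmat_pow n X k i j V \<noteq> 0 \<Longrightarrow> V \<subseteq> \<Union>{S. \<exists>i<n. \<exists>j<n. X i j S \<noteq> 0}"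
proof (induction k arbitrary: i j V)
  case 0
  hence "i = j \<and> V = {}" by (simp add: gmat_one_def gone_def gzero_def split: if_splits)
  thus ?case by simp
next
  case (Suc k)
  let ?F = "\<Union>{S. \<exists>i<n. \<exists>j<n. X i j S \<noteq> 0}"
  have ij: "i < n \<and> j < n"
  proof (rule ccontr)
    assume "\<not> (i < n \<and> j < n)"
    thus False using Suc.prems by (simp add: pow_Suc mm_out gzero_def)
  qed
  hence "(\<Sum>l<n. gmult (X i l) (gmat_pow n X k l j) V) \<noteq> 0" using Suc.prems by (simp add: pow_Suc mm_entry)
  then obtain l where l: "l \<in> {..<n}" "gmult (X i l) (gmat_pow n X k l j) V \<noteq> 0"
    by (rule sum.not_neutral_contains_not_neutral)
  from gmult_nz[OF l(2)] obtain S where S: "S \<subseteq> V" "X i l S \<noteq> 0" "gmat_pow n X k l j (V - S) \<noteq> 0"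
    by blast
  have "S \<in> {S. \<exists>i<n. \<exists>j<n. X i j S \<noteq> 0}" using S(2) ij l(1) by auto
  hence s1: "S \<subseteq> ?F" by (rule Union_upper)
  have s2: "V - S \<subseteq> ?F" by (rule Suc.IH[OF S(3)])
  show ?case using s1 s2 by blast
qed

lemma gexp_nz:
  assumes "gexp p q X i j V \<noteq> 0" shows "\<exists>k. gmat_pow (p + q) X k i j V \<noteq> 0"
proof (rule ccontr)
  assume "\<not> ?thesis"
  hence "gexp p q X i j V = (\<Sum>k. 0)" unfolding gexp_eq by simp
  thus False using assms by simp
qed

lemma supp_fin:
  assumes Xe: "even_gmat p q X"
  shows "finite (\<Union>{S. \<exists>i<p+q. \<exists>j<p+q. X i j S \<noteq> 0})"
proof -
  have h: "ghom (ipar p i j) (X i j)" if "i < p+q" "j < p+q" for i j using even_gmat_hom[OF Xe that] .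
  have fi: "finite {S. X i j S \<noteq> 0}" if "i < p+q" "j < p+q" for i j
    using h[OF that] unfolding ghom_def grass_elems_def by blast
  have fs: "finite S" if "X i j S \<noteq> 0" "i < p+q" "j < p+q" for i j S
    using h[OF that(2,3)] that(1) unfolding ghom_def grass_elems_def by blast
  have sub: "{S. \<exists>i<p+q. \<exists>j<p+q. X i j S \<noteq> 0} \<subseteq> (\<Union>i\<in>{..<p+q}. \<Union>j\<in>{..<p+q}. {S. X i j S \<noteq> 0})"
    by blast
  have "finite (\<Union>i\<in>{..<p+q}. \<Union>j\<in>{..<p+q}. {S. X i j S \<noteq> 0})"
    by (intro finite_UN_I finite_lessThan fi) auto
  hence f1: "finite {S. \<exists>i<p+q. \<exists>j<p+q. X i j S \<noteq> 0}" using sub by (rule finite_subset[rotated])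
  show ?thesis by (rule finite_Union[OF f1]) (use fs in blast)
qed

lemma gexp_even:
  assumes X: "X \<in> gl p q" shows "even_gmat p q (gexp p q X)"
proof -
  let ?n = "p + q"
  have Xe: "even_gmat p q X" using X by (simp add: gl_def)
  let ?F = "\<Union>{S. \<exists>i<?n. \<exists>j<?n. X i j S \<noteq> 0}"
  have fF: "finite ?F" by (rule supp_fin[OF Xe])
  show ?thesis unfolding even_gmat_iff
  proof (intro conjI allI impI)
    fix i j assume out: "\<not> (i < ?n \<and> j < ?n)"
    show "gexp p q X i j = gzero"
    proof
      fix U
      have "gmat_pow ?n X k i j U = 0" for k
      proof -
        have "gmat_pow ?n X k i j = gzero" by (rule even_gmat_out[OF even_gmat_pow[OF Xe] out])
        thus ?thesis by (simp add: gzero_def)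
      qed
      thus "gexp p q X i j U = gzero U" by (simp add: gexp_eq gzero_def)
    qed
  next
    fix i j assume ij: "i < ?n \<and> j < ?n"
    have sub: "{V. gexp p q X i j V \<noteq> 0} \<subseteq> Pow ?F"
    proof
      fix V assume "V \<in> {V. gexp p q X i j V \<noteq> 0}"
      hence nz: "gexp p q X i j V \<noteq> 0" by simp
      obtain k where "gmat_pow ?n X k i j V \<noteq> 0" using gexp_nz[OF nz] by blast
      hence "V \<subseteq> ?F" by (rule pow_supp)
      thus "V \<in> Pow ?F" by simp
    qed
    have fin: "finite {V. gexp p q X i j V \<noteq> 0}"
      by (rule finite_subset[OF sub]) (use fF in simp)
    have fV: "\<forall>V. gexp p q X i j V \<noteq> 0 \<longrightarrow> finite V"
    proof (intro allI impI)
      fix V assume "gexp p q X i j V \<noteq> 0"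
      hence "V \<subseteq> ?F" using sub by blast
      thus "finite V" using fF by (rule finite_subset)
    qed
    have par: "\<forall>V. even (card V) \<noteq> ipar p i j \<longrightarrow> gexp p q X i j V = 0"
    proof (intro allI impI)
      fix V :: "nat set" assume V: "even (card V) \<noteq> ipar p i j"
      show "gexp p q X i j V = 0"
      proof (rule ccontr)
        assume "gexp p q X i j V \<noteq> 0"
        then obtain k where "gmat_pow ?n X k i j V \<noteq> 0" using gexp_nz[of p q X i j V] by blast
        moreover have "ghom (ipar p i j) (gmat_pow ?n X k i j)"
          by (rule even_gmat_hom[OF even_gmat_pow[OF Xe]]) (use ij in auto)
        ultimately have "gmat_pow ?n X k i j V = 0" using V unfolding ghom_def by blast
        thus False using \<open>gmat_pow ?n X k i j V \<noteq> 0\<close> by contradiction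
      qed
    qed
    show "ghom (ipar p i j) (gexp p q X i j)"
      unfolding ghom_def grass_elems_def mem_Collect_eq by (intro conjI fin fV par)
  qed
qed

lemma ghom_neg: "ghom e a \<Longrightarrow> ghom e (\<lambda>U. - a U)"
  using ghom_scal[of e a "-1"] by simp

lemma gl_neg: "X \<in> gl p q \<Longrightarrow> mscal (-1) X \<in> gl p q"
  unfolding gl_def even_gmat_iff mscal_def
  by (auto simp: gzero_def intro: ghom_neg)

lemma mscal_neg_neg[simp]: "mscal (-1) (mscal (-1) X) = X"
  by (simp add: mscal_def)

lemma gexp_carrier:
  assumes X: "X \<in> gl p q" shows "gexp p q X \<in> carrier (GLgrp p q)"
proof -
  have e1: "even_gmat p q (gexp p q X)" by (rule gexp_even[OF X])
  have e2: "even_gmat p q (gexp p q (mscal (-1) X))" by (rule gexp_even[OF gl_neg[OF X]])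
  have i1: "gmat_mult (p + q) (gexp p q X) (gexp p q (mscal (-1) X)) = gmat_one (p + q)"
    by (rule gexp_inv)
  have i2: "gmat_mult (p + q) (gexp p q (mscal (-1) X)) (gexp p q X) = gmat_one (p + q)"
    using gexp_inv[of p q "mscal (-1) X"] by (simp only: mscal_neg_neg)
  have "gexp p q X \<in> GLset p q"
    unfolding GLset_def mem_Collect_eq
    by (rule conjI[OF e1 exI[of _ "gexp p q (mscal (-1) X)"]]) (intro conjI e2 i1 i2)
  thus ?thesis by (simp add: GLgrp_def)
qed

definition Esg :: "nat \<Rightarrow> nat \<Rightarrow> grass \<Rightarrow> gmat" where
  "Esg r c a = (\<lambda>k l. if k = r \<and> l = c then a else gzero)"

definition cst :: "complex \<Rightarrow> grass" where
  "cst x = (\<lambda>S. if S = {} then x else 0)"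

lemma gfin_cst[simp]: "gfin (cst x)" by (auto simp: gfin_def cst_def)

lemma ghom_cst[simp]: "ghom True (cst x)"
proof -
  have "{S. cst x S \<noteq> 0} \<subseteq> {{}}" by (auto simp: cst_def)
  hence "finite {S. cst x S \<noteq> 0}" using finite_subset by blast
  thus ?thesis by (auto simp: ghom_def grass_elems_def cst_def)
qed

lemma gmult_cst: "gfin b \<Longrightarrow> gmult (cst x) b = (\<lambda>U. x * b U)"
proof (rule ext)
  fix U assume g: "gfin b"
  show "gmult (cst x) b U = x * b U"
  proof (cases "finite U")
    case True
    have "gmult (cst x) b U = (\<Sum>S\<in>Pow U. if S = {} then x * b U else 0)"
      unfolding gmult_fin[OF True] cst_def by (intro sum.cong) auto
    also have "\<dots> = x * b U" using True by (simp add: sum.delta)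
    finally show ?thesis .
  qed (use g in \<open>auto simp: gfin_def gmult_inf\<close>)
qed

lemma cst_mult_cst: "gmult (cst x) (cst y) = cst (x * y)"
  by (simp add: gmult_cst) (auto simp: cst_def)

lemma esg_mm:
  assumes "r < n" "c < n"
  shows "gmat_mult n (Esg r c a) B = (\<lambda>k l. if k = r \<and> l < n then gmult a (B c l) else gzero)"
proof (intro ext)
  fix k l U
  show "gmat_mult n (Esg r c a) B k l U = (if k = r \<and> l < n then gmult a (B c l) else gzero) U"
  proof (cases "k < n \<and> l < n")
    case True
    have "gmat_mult n (Esg r c a) B k l U = (\<Sum>m<n. if m = c then (if k = r then gmult a (B c l) U else 0) else 0)"
      unfolding mm_entry[OF conjunct1[OF True] conjunct2[OF True]]
      by (intro sum.cong refl) (auto simp: Esg_def gzero_def)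
    also have "\<dots> = (if k = r then gmult a (B c l) U else 0)" using assms by (simp add: sum.delta)
    finally show ?thesis using True by (simp add: gzero_def)
  qed (use assms in \<open>auto simp: mm_out\<close>)
qed

lemma mgood_esg: "r < n \<Longrightarrow> c < n \<Longrightarrow> gfin a \<Longrightarrow> mgood n (Esg r c a)"
  by (auto simp: mgood_def Esg_def)

lemma esg_gl: "r < p + q \<Longrightarrow> c < p + q \<Longrightarrow> ghom (ipar p r c) a \<Longrightarrow> Esg r c a \<in> gl p q"
  unfolding gl_def even_gmat_iff by (auto simp: Esg_def)

definition mz :: gmat where "mz = (\<lambda>_ _. gzero)"

lemma mm_mz: "gmat_mult n mz B = mz"
  by (intro ext) (auto simp: gmat_mult_def mz_def gzero_def)

lemma gexp_nil:
  assumes X: "mgood (p + q) X" and XX: "gmat_mult (p + q) X X = mz"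
  shows "gexp p q X = madd (gmat_one (p + q)) X"
proof (intro ext)
  fix i j U
  let ?n = "p + q"
  have pw: "gmat_pow ?n X k = (if k = 0 then gmat_one ?n else if k = 1 then X else mz)" for k
  proof (cases k)
    case (Suc k')
    show ?thesis
    proof (cases k')
      case 0 thus ?thesis using Suc X by (simp add: pow_Suc mm_one)
    next
      case (Suc k'')
      have "gmat_pow ?n X k = gmat_mult ?n (gmat_mult ?n X X) (gmat_pow ?n X k'')"
        using \<open>k = Suc k'\<close> Suc by (simp add: pow_Suc mm_assoc)
      thus ?thesis using XX \<open>k = Suc k'\<close> Suc by (simp add: mm_mz)
    qed
  qed simp
  have "(\<lambda>k. gmat_pow ?n X k i j U / of_nat (fact k)) =
        (\<lambda>k. (if k = 0 then gmat_one ?n i j U else 0) + (if k = 1 then X i j U else 0))"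
    by (rule ext) (simp add: pw mz_def gzero_def)
  moreover have "(\<lambda>k. (if k = 0 then gmat_one ?n i j U else 0) + (if k = 1 then X i j U else 0)) sums
      (gmat_one ?n i j U + X i j U)"
    by (intro sums_add) (rule sums_single[of _ "\<lambda>_. _", simplified])+
  ultimately have "(\<lambda>k. gmat_pow ?n X k i j U / of_nat (fact k)) sums (gmat_one ?n i j U + X i j U)" by simp
  thus "gexp p q X i j U = madd (gmat_one ?n) X i j U"
    using gexp_sums sums_unique2 unfolding madd_def by metis
qed

lemma esg_sq:
  assumes "r < n" "c < n" "r \<noteq> c \<or> gmult a a = gzero"
  shows "gmat_mult n (Esg r c a) (Esg r c a) = mz"
proof -
  have "gmat_mult n (Esg r c a) (Esg r c a) = (\<lambda>k l. if k = r \<and> l < n then gmult a (Esg r c a c l) else gzero)"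
    by (rule esg_mm[OF assms(1,2)])
  also have "\<dots> = mz" using assms(3) by (auto simp: Esg_def mz_def intro!: ext)
  finally show ?thesis .
qed

lemma gexp_esg_nil:
  assumes "r < p + q" "c < p + q" "gfin a" "r \<noteq> c \<or> gmult a a = gzero"
  shows "gexp p q (Esg r c a) = madd (gmat_one (p + q)) (Esg r c a)"
  by (rule gexp_nil) (use assms in \<open>simp_all add: mgood_esg esg_sq\<close>)

lemma pow_diag:
  assumes j: "j < n"
  shows "gmat_pow n (Esg j j (cst x)) (Suc k) = Esg j j (cst (x ^ Suc k))"
proof (induction k)
  case 0 show ?case using j by (simp add: pow_Suc mm_one mgood_esg)
next
  case (Suc k)
  have "gmat_pow n (Esg j j (cst x)) (Suc (Suc k)) = gmat_mult n (Esg j j (cst x)) (Esg j j (cst (x ^ Suc k)))"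
    using Suc by (simp add: pow_Suc)
  also have "\<dots> = Esg j j (cst (x ^ Suc (Suc k)))"
    by (simp only: esg_mm[OF j j]) (use j in \<open>auto simp: Esg_def cst_mult_cst intro!: ext\<close>)
  finally show ?case .
qed

lemma exp_series_complex: "(\<lambda>k. x ^ k / of_nat (fact k)) sums exp (x::complex)"
proof -
  have "(\<lambda>k. x ^ k /\<^sub>R fact k) sums exp x" by (rule exp_converges)
  moreover have "(\<lambda>k. x ^ k /\<^sub>R fact k) = (\<lambda>k. x ^ k / of_nat (fact k))"
    by (rule ext) (simp add: scaleR_conv_of_real field_simps)
  ultimately show ?thesis by simp
qed

lemma gexp_diag:
  assumes j: "j < p + q"
  shows "gexp p q (Esg j j (cst x)) = madd (gmat_one (p + q)) (Esg j j (cst (exp x - 1)))"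
proof (intro ext)
  fix k l U
  let ?n = "p + q"
  let ?X = "Esg j j (cst x)"
  show "gexp p q ?X k l U = madd (gmat_one ?n) (Esg j j (cst (exp x - 1))) k l U"
  proof (cases "k = j \<and> l = j \<and> U = {}")
    case True
    have "(\<lambda>m. gmat_pow ?n ?X m k l U / of_nat (fact m)) = (\<lambda>m. x ^ m / of_nat (fact m))"
    proof
      fix m show "gmat_pow ?n ?X m k l U / of_nat (fact m) = x ^ m / of_nat (fact m)"
        using True j by (cases m) (simp_all add: pow_diag[OF j], simp_all add: gmat_one_def gone_def Esg_def cst_def)
    qed
    hence "gexp p q ?X k l U = exp x" using gexp_sums[of p q ?X k l U] exp_series_complex sums_unique2 by metis
    thus ?thesis using True j by (simp add: madd_def gmat_one_def gone_def Esg_def cst_def)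
  next
    case False
    have "(\<lambda>m. gmat_pow ?n ?X m k l U / of_nat (fact m)) = (\<lambda>m. if m = 0 then gmat_one ?n k l U else 0)"
    proof
      fix m show "gmat_pow ?n ?X m k l U / of_nat (fact m) = (if m = 0 then gmat_one ?n k l U else 0)"
        using False by (cases m) (simp_all add: pow_diag[OF j], auto simp: Esg_def cst_def gzero_def)
    qed
    moreover have "(\<lambda>m. if m = 0 then gmat_one ?n k l U else 0) sums gmat_one ?n k l U"
      by (rule sums_single[of _ "\<lambda>_. _", simplified])
    ultimately have "gexp p q ?X k l U = gmat_one ?n k l U" using gexp_sums[of p q ?X k l U] sums_unique2 by metis
    thus ?thesis using False by (auto simp: madd_def Esg_def cst_def gzero_def)
  qed
qed

lemma carrier_even: "A \<in> carrier (GLgrp p q) \<Longrightarrow> even_gmat p q A"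
  by (simp add: GLgrp_def GLset_def)

lemma mult_madd_one:
  assumes "mgood n A"
  shows "gmat_mult n (madd (gmat_one n) E) A = madd A (gmat_mult n E A)"
  using assms by (simp add: mm_madd1 one_mm)

lemma supp_sub:
  assumes Xe: "even_gmat p q X" and nz: "X i j S \<noteq> 0"
  shows "S \<subseteq> \<Union>{S. \<exists>i<p+q. \<exists>j<p+q. X i j S \<noteq> 0}"
proof -
  have "i < p + q \<and> j < p + q"
  proof (rule ccontr)
    assume "\<not> (i < p + q \<and> j < p + q)"
    hence "X i j = gzero" by (rule even_gmat_out[OF Xe])
    thus False using nz by (simp add: gzero_def)
  qed
  hence "S \<in> {S. \<exists>i<p+q. \<exists>j<p+q. X i j S \<noteq> 0}" using nz by blast
  thus ?thesis by (rule Union_upper)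
qed

definition HH :: "nat \<Rightarrow> nat \<Rightarrow> gmat set" where
  "HH p q = generate (GLgrp p q) (gexp p q ` gl p q)"

lemma GL_mult: "x \<otimes>\<^bsub>GLgrp p q\<^esub> y = gmat_mult (p + q) x y" by (simp add: GLgrp_def)
lemma GL_one: "\<one>\<^bsub>GLgrp p q\<^esub> = gmat_one (p + q)" by (simp add: GLgrp_def)

lemma one_HH: "gmat_one (p + q) \<in> HH p q"
  using generate.one[of "GLgrp p q" "gexp p q ` gl p q"] by (simp add: HH_def GL_one)

lemma back_gen:
  assumes Y: "Y \<in> gl p q" and A: "A \<in> carrier (GLgrp p q)"
    and M: "gmat_mult (p + q) (gexp p q Y) A \<in> HH p q"
  shows "A \<in> HH p q"
proof -
  interpret grp: group "GLgrp p q" by (rule GL_group)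
  have E: "gexp p q Y \<in> carrier (GLgrp p q)" by (rule gexp_carrier[OF Y])
  have I: "inv\<^bsub>GLgrp p q\<^esub> (gexp p q Y) \<in> HH p q"
    unfolding HH_def by (rule generate.inv) (use Y in blast)
  have M': "gexp p q Y \<otimes>\<^bsub>GLgrp p q\<^esub> A \<in> HH p q" using M by (simp add: GL_mult)
  have "inv\<^bsub>GLgrp p q\<^esub> (gexp p q Y) \<otimes>\<^bsub>GLgrp p q\<^esub> (gexp p q Y \<otimes>\<^bsub>GLgrp p q\<^esub> A) \<in> HH p q"
    using I M' unfolding HH_def by (rule generate.eng)
  moreover have "inv\<^bsub>GLgrp p q\<^esub> (gexp p q Y) \<otimes>\<^bsub>GLgrp p q\<^esub> (gexp p q Y \<otimes>\<^bsub>GLgrp p q\<^esub> A) = A"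
    using E A by (simp add: grp.m_assoc[symmetric])
  ultimately show ?thesis by simp
qed

lemma step_eq:
  assumes A: "A \<in> carrier (GLgrp p q)" and eY: "gexp p q Y = madd (gmat_one (p + q)) E"
  shows "gmat_mult (p + q) (gexp p q Y) A = madd A (gmat_mult (p + q) E A)"
proof -
  have "mgood (p + q) A" using A by (simp add: carrier_even even_gmat_good)
  thus ?thesis by (simp add: eY mult_madd_one)
qed

lemma step_carrier:
  assumes Y: "Y \<in> gl p q" and A: "A \<in> carrier (GLgrp p q)" and eY: "gexp p q Y = madd (gmat_one (p + q)) E"
  shows "madd A (gmat_mult (p + q) E A) \<in> carrier (GLgrp p q)"
proof -
  interpret grp: group "GLgrp p q" by (rule GL_group)
  have "gexp p q Y \<otimes>\<^bsub>GLgrp p q\<^esub> A \<in> carrier (GLgrp p q)"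
    by (rule grp.m_closed[OF gexp_carrier[OF Y] A])
  thus ?thesis using step_eq[OF A eY] by (simp add: GL_mult)
qed

lemma step_back:
  assumes Y: "Y \<in> gl p q" and A: "A \<in> carrier (GLgrp p q)" and eY: "gexp p q Y = madd (gmat_one (p + q)) E"
    and H: "madd A (gmat_mult (p + q) E A) \<in> HH p q"
  shows "A \<in> HH p q"
  by (rule back_gen[OF Y A]) (use step_eq[OF A eY] H in simp)

lemma esg_upd:
  assumes "r < n" "c < n"
  shows "madd A (gmat_mult n (Esg r c a) A) k l U = A k l U + (if k = r \<and> l < n then gmult a (A c l) U else 0)"
  using assms by (simp add: esg_mm madd_def gzero_def)

definition mono :: "nat set \<Rightarrow> complex \<Rightarrow> grass" where
  "mono S x = (\<lambda>T. if T = S then x else 0)"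

lemma gmult_mono:
  "gmult (mono S x) b T = (if finite T \<and> S \<subseteq> T then gsign S (T - S) * x * b (T - S) else 0)"
proof (cases "finite T")
  case True
  have "gmult (mono S x) b T = (\<Sum>R\<in>Pow T. if R = S then gsign S (T - S) * x * b (T - S) else 0)"
    unfolding gmult_fin[OF True] mono_def by (intro sum.cong) auto
  also have "\<dots> = (if S \<in> Pow T then gsign S (T - S) * x * b (T - S) else 0)"
    using True by (simp add: sum.delta)
  finally show ?thesis using True by simp
qed (simp add: gmult_inf)

lemma mono_sq: "S \<noteq> {} \<Longrightarrow> gmult (mono S x) (mono S x) = gzero"
proof (rule ext)
  fix T assume S: "S \<noteq> {}"
  have "\<not> (S \<subseteq> T \<and> T - S = S)"
  proof
    assume h: "S \<subseteq> T \<and> T - S = S"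
    hence "S \<inter> S = {}" by blast
    thus False using S by simp
  qed
  thus "gmult (mono S x) (mono S x) T = gzero T"
    unfolding gmult_mono by (auto simp: mono_def gzero_def)
qed

lemma ghom_mono: "finite S \<Longrightarrow> even (card S) = e \<Longrightarrow> ghom e (mono S x)"
proof -
  assume fS: "finite S" and e: "even (card S) = e"
  have "{T. mono S x T \<noteq> 0} \<subseteq> {S}" by (auto simp: mono_def)
  hence "finite {T. mono S x T \<noteq> 0}" using finite_subset by blast
  thus ?thesis using fS e by (auto simp: ghom_def grass_elems_def mono_def)
qed

section \<open>The nilpotent stage\<close>

definition nilP :: "nat \<Rightarrow> nat \<Rightarrow> nat set \<Rightarrow> nat \<Rightarrow> bool" where
  "nilP p q F d \<longleftrightarrow> (\<forall>A. A \<in> carrier (GLgrp p q) \<and> (\<forall>i j S. A i j S \<noteq> 0 \<longrightarrow> S \<subseteq> F)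
      \<and> (\<forall>i j S. card S < d \<longrightarrow> A i j S = gmat_one (p + q) i j S) \<longrightarrow> A \<in> HH p q)"

definition badset :: "nat \<Rightarrow> nat \<Rightarrow> nat set \<Rightarrow> nat \<Rightarrow> gmat \<Rightarrow> (nat \<times> nat \<times> nat set) set" where
  "badset p q F d A = {(i, j, S). i < p + q \<and> j < p + q \<and> S \<subseteq> F \<and> card S = d \<and> A i j S \<noteq> 0}"

lemma one_nz: "gmat_one n i j S \<noteq> 0 \<Longrightarrow> S = {} \<and> i = j \<and> i < n"
  by (auto simp: gmat_one_def gone_def gzero_def split: if_splits)

lemma one_empty: "i < n \<Longrightarrow> j < n \<Longrightarrow> gmat_one n i j {} = (if i = j then 1 else 0)"
  by (auto simp: gmat_one_def gone_def gzero_def)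

lemma nil_base:
  assumes fF: "finite F"
  shows "nilP p q F (card F + 1)"
  unfolding nilP_def
proof (intro allI impI, elim conjE)
  fix A assume A: "A \<in> carrier (GLgrp p q)" and supp: "\<forall>i j S. A i j S \<noteq> 0 \<longrightarrow> S \<subseteq> F"
    and low: "\<forall>i j S. card S < card F + 1 \<longrightarrow> A i j S = gmat_one (p + q) i j S"
  have "A = gmat_one (p + q)"
  proof (intro ext)
    fix i j T
    show "A i j T = gmat_one (p + q) i j T"
    proof (cases "T \<subseteq> F")
      case True
      hence "card T \<le> card F" using fF by (rule card_mono[rotated])
      thus ?thesis using low by simp
    next
      case False
      hence "A i j T = 0" using supp by blast
      moreover have "gmat_one (p + q) i j T = 0" using False one_nz by blast
      ultimately show ?thesis by simp
    qed
  qed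
  thus "A \<in> HH p q" using one_HH by simp
qed

lemma nil_inner:
  assumes fF: "finite F" and d: "1 \<le> d" and IH: "nilP p q F (Suc d)"
  shows "card (badset p q F d A) = N \<Longrightarrow> A \<in> carrier (GLgrp p q) \<Longrightarrow> (\<forall>i j S. A i j S \<noteq> 0 \<longrightarrow> S \<subseteq> F)
      \<Longrightarrow> (\<forall>i j S. card S < d \<longrightarrow> A i j S = gmat_one (p + q) i j S) \<Longrightarrow> A \<in> HH p q"
proof (induction N arbitrary: A rule: less_induct)
  case (less N A)
  let ?n = "p + q"
  have A: "A \<in> carrier (GLgrp p q)" by fact
  have supp: "\<forall>i j S. A i j S \<noteq> 0 \<longrightarrow> S \<subseteq> F" by fact
  have low: "\<forall>i j S. card S < d \<longrightarrow> A i j S = gmat_one ?n i j S" by fact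
  have Ae: "even_gmat p q A" using A by (rule carrier_even)
  have fin_bad: "finite (badset p q F d B)" for B
  proof (rule finite_subset)
    show "badset p q F d B \<subseteq> {..<?n} \<times> {..<?n} \<times> Pow F" by (auto simp: badset_def)
    show "finite ({..<?n} \<times> {..<?n} \<times> Pow F)" using fF by simp
  qed
  show ?case
  proof (cases "badset p q F d A = {}")
    case True
    have low': "\<forall>i j S. card S < Suc d \<longrightarrow> A i j S = gmat_one ?n i j S"
    proof (intro allI impI)
      fix i j and S :: "nat set" assume cS: "card S < Suc d"
      show "A i j S = gmat_one ?n i j S"
      proof (cases "card S < d")
        case True thus ?thesis using low by blast
      next
        case False
        hence cSd: "card S = d" using cS by simp
        hence Sne: "S \<noteq> {}" using d by auto
        have o: "gmat_one ?n i j S = 0" using Sne one_nz by blast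
        have "A i j S = 0"
        proof (rule ccontr)
          assume nz: "A i j S \<noteq> 0"
          have ij: "i < ?n \<and> j < ?n"
          proof (rule ccontr)
            assume "\<not> (i < ?n \<and> j < ?n)"
            hence "A i j = gzero" by (rule even_gmat_out[OF Ae])
            thus False using nz by (simp add: gzero_def)
          qed
          have "(i, j, S) \<in> badset p q F d A" using ij nz supp cSd by (auto simp: badset_def)
          thus False using True by simp
        qed
        thus ?thesis using o by simp
      qed
    qed
    show ?thesis using IH A supp low' unfolding nilP_def by blast
  next
    case False
    then obtain i j S where ijS: "(i, j, S) \<in> badset p q F d A" by auto
    hence i: "i < ?n" and j: "j < ?n" and SF: "S \<subseteq> F" and cS: "card S = d" and cnz: "A i j S \<noteq> 0"
      by (auto simp: badset_def)
    define c where "c = A i j S"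
    have fS: "finite S" using SF fF finite_subset by blast
    have Sne: "S \<noteq> {}" using cS d by auto
    have hA: "ghom (ipar p i j) (A i j)" by (rule even_gmat_hom[OF Ae i j])
    have par: "even (card S) = ipar p i j"
      using hA cnz unfolding ghom_def by blast
    define a where "a = mono S (- c)"
    have ha: "ghom (ipar p i j) a" unfolding a_def by (rule ghom_mono[OF fS par])
    define Y where "Y = Esg i j a"
    have Ygl: "Y \<in> gl p q" unfolding Y_def by (rule esg_gl[OF i j ha])
    have eY: "gexp p q Y = madd (gmat_one ?n) Y"
      unfolding Y_def by (rule gexp_esg_nil[OF i j ghom_gfin[OF ha]]) (simp add: a_def mono_sq[OF Sne])
    define A' where "A' = madd A (gmat_mult ?n Y A)"
    have A'c: "A' \<in> carrier (GLgrp p q)" unfolding A'_def by (rule step_carrier[OF Ygl A eY])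
    have ent: "A' k l T = A k l T + (if k = i \<and> l < ?n \<and> finite T \<and> S \<subseteq> T
                  then gsign S (T - S) * (- c) * A j l (T - S) else 0)" for k l T
      unfolding A'_def Y_def esg_upd[OF i j] a_def gmult_mono by auto
    have supp': "\<forall>k l T. A' k l T \<noteq> 0 \<longrightarrow> T \<subseteq> F"
    proof (intro allI impI)
      fix k l T assume nz: "A' k l T \<noteq> 0"
      show "T \<subseteq> F"
      proof (cases "k = i \<and> l < ?n \<and> finite T \<and> S \<subseteq> T \<and> A j l (T - S) \<noteq> 0")
        case True
        hence "T - S \<subseteq> F" using supp by blast
        thus ?thesis using True SF by blast
      next
        case False
        hence "A' k l T = A k l T" using ent[of k l T] by auto
        thus ?thesis using nz supp by auto
      qed
    qed
    have low': "\<forall>k l T. card T < d \<longrightarrow> A' k l T = gmat_one ?n k l T"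
    proof (intro allI impI)
      fix k l and T :: "nat set" assume cT: "card T < d"
      have "\<not> (finite T \<and> S \<subseteq> T)"
      proof
        assume "finite T \<and> S \<subseteq> T"
        hence "card S \<le> card T" using card_mono by blast
        thus False using cT cS by simp
      qed
      hence "A' k l T = A k l T" using ent[of k l T] by auto
      thus "A' k l T = gmat_one ?n k l T" using low cT by simp
    qed
    have Ajj: "A j j {} = 1"
    proof -
      have "A j j {} = gmat_one ?n j j {}" using low d by simp
      thus ?thesis using j by (simp add: one_empty)
    qed
    have A'ijS: "A' i j S = 0" using ent[of i j S] fS j Ajj by (simp add: c_def)
    have badsub: "badset p q F d A' \<subseteq> badset p q F d A - {(i, j, S)}"
    proof
      fix x assume x: "x \<in> badset p q F d A'"
      obtain k l T where xe: "x = (k, l, T)" by (cases x) auto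
      have k: "k < ?n" and l: "l < ?n" and TF: "T \<subseteq> F" and cT: "card T = d" and nz: "A' k l T \<noteq> 0"
        using x xe by (auto simp: badset_def)
      have ne: "(k, l, T) \<noteq> (i, j, S)" using nz A'ijS by auto
      have "A k l T \<noteq> 0"
      proof (cases "k = i \<and> l < ?n \<and> finite T \<and> S \<subseteq> T")
        case True
        hence TS: "T = S" using card_subset_eq[of T S] cT cS by auto
        hence lj: "l \<noteq> j" using ne True by auto
        have "A j l {} = gmat_one ?n j l {}" using low d by simp
        hence "A j l {} = 0" using lj j l by (simp add: one_empty)
        hence "A' k l T = A k l T" using ent[of k l T] TS by simp
        thus ?thesis using nz by simp
      next
        case False
        hence "A' k l T = A k l T" using ent[of k l T] by auto
        thus ?thesis using nz by simp
      qed
      thus "x \<in> badset p q F d A - {(i, j, S)}" using k l TF cT ne xe by (auto simp: badset_def)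
    qed
    have "card (badset p q F d A') \<le> card (badset p q F d A - {(i, j, S)})"
      by (rule card_mono[OF _ badsub]) (use fin_bad in simp)
    also have "\<dots> < card (badset p q F d A)" by (rule card_Diff1_less[OF fin_bad ijS])
    finally have "card (badset p q F d A') < N" using less.prems(1) by simp
    hence "A' \<in> HH p q" using less.IH A'c supp' low' by blast
    thus ?thesis unfolding A'_def by (rule step_back[OF Ygl A eY])
  qed
qed

lemma nil_step:
  assumes fF: "finite F" and d: "1 \<le> d" and IH: "nilP p q F (Suc d)"
  shows "nilP p q F d"
  unfolding nilP_def using nil_inner[OF fF d IH] by blast

lemma nil_all:
  assumes fF: "finite F" and d: "1 \<le> d" "d \<le> card F + 1"
  shows "nilP p q F d"
  using d(2)
proof (induction rule: inc_induct)
  case base show ?case by (rule nil_base[OF fF])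
next
  case (step m)
  have "1 \<le> m" using d(1) step.hyps(1) by simp
  thus ?case by (rule nil_step[OF fF _ step.IH])
qed

section \<open>The body stage\<close>

lemma body_upd:
  assumes "r < n" "c < n"
  shows "madd A (gmat_mult n (Esg r c a) A) k l {} = A k l {} + (if k = r \<and> l < n then a {} * A c l {} else 0)"
  by (simp add: esg_upd[OF assms])

lemma pivot:
  assumes A: "A \<in> carrier (GLgrp p q)" and j: "j < p + q"
    and inv: "\<forall>c<j. \<forall>r<p+q. A r c {} = (if r = c then 1 else 0)"
  shows "\<exists>i. j \<le> i \<and> i < p + q \<and> A i j {} \<noteq> 0"
proof (rule ccontr)
  let ?n = "p + q"
  assume "\<not> ?thesis"
  hence z: "\<And>i. j \<le> i \<Longrightarrow> i < ?n \<Longrightarrow> A i j {} = 0" by auto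
  obtain B where B: "gmat_mult ?n B A = gmat_one ?n" using A by (auto simp: GLgrp_def GLset_def)
  have BA: "(\<Sum>l<?n. B r l {} * A l c {}) = (if r = c then 1 else 0)" if "r < ?n" "c < ?n" for r c
  proof -
    have "gmat_mult ?n B A r c {} = gmat_one ?n r c {}" using B by simp
    thus ?thesis using that by (simp add: mm_body one_empty)
  qed
  define v where "v c = (if c < j then - A c j {} else if c = j then 1 else 0)" for c
  have Av: "(\<Sum>c<?n. A l c {} * v c) = 0" if l: "l < ?n" for l
  proof -
    have "(\<Sum>c<?n. A l c {} * v c) = (\<Sum>c<?n. (if l < j then (if c = l then - A l j {} else 0) else 0) + (if c = j then A l j {} else 0))"
    proof (rule sum.cong[OF refl])
      fix c assume c: "c \<in> {..<?n}"
      show "A l c {} * v c = (if l < j then (if c = l then - A l j {} else 0) else 0) + (if c = j then A l j {} else 0)"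
      proof (cases "c < j")
        case True
        hence "A l c {} = (if l = c then 1 else 0)" using inv l by blast
        thus ?thesis using True by (auto simp: v_def)
      next
        case False thus ?thesis by (auto simp: v_def)
      qed
    qed
    also have "\<dots> = (if l < j then - A l j {} else 0) + A l j {}"
      using l j by (cases "l < j") (simp_all add: sum.distrib)
    also have "\<dots> = 0" using z l by (cases "l < j") auto
    finally show ?thesis .
  qed
  have "(1::complex) = (\<Sum>c<?n. if j = c then v c else 0)" using j by (simp add: v_def)
  also have "\<dots> = (\<Sum>c<?n. (\<Sum>l<?n. B j l {} * A l c {}) * v c)"
    by (rule sum.cong[OF refl]) (use BA j in auto)
  also have "\<dots> = (\<Sum>c<?n. \<Sum>l<?n. B j l {} * A l c {} * v c)" by (simp add: sum_distrib_right)
  also have "\<dots> = (\<Sum>l<?n. \<Sum>c<?n. B j l {} * A l c {} * v c)" by (rule sum.swap)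
  also have "\<dots> = (\<Sum>l<?n. B j l {} * (\<Sum>c<?n. A l c {} * v c))" by (simp add: sum_distrib_left mult.assoc)
  also have "\<dots> = 0" using Av by simp
  finally show False by simp
qed

lemma ipar_of_body:
  assumes "ghom e a" "a {} \<noteq> 0" shows e
proof (rule ccontr)
  assume ne: "\<not> e"
  have "\<forall>S. even (card S) \<noteq> e \<longrightarrow> a S = 0" using assms(1) unfolding ghom_def by blast
  hence "even (card ({}::nat set)) \<noteq> e \<longrightarrow> a {} = 0" by blast
  thus False using ne assms(2) by simp
qed

lemma exp_surj:
  fixes a :: complex assumes "a \<noteq> 0" shows "\<exists>z. exp z = a"
proof
  let ?z = "Complex (ln (cmod a)) (Arg a)"
  have "exp ?z = of_real (exp (ln (cmod a))) * cis (Arg a)" by (simp add: exp_eq_polar)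
  also have "\<dots> = rcis (cmod a) (Arg a)" using assms by (simp add: rcis_def)
  also have "\<dots> = a" by (rule rcis_cmod_Arg)
  finally show "exp ?z = a" .
qed

definition bodyP :: "nat \<Rightarrow> nat \<Rightarrow> nat \<Rightarrow> bool" where
  "bodyP p q j \<longleftrightarrow> (\<forall>A. A \<in> carrier (GLgrp p q) \<and> (\<forall>c<j. \<forall>r<p+q. A r c {} = (if r = c then 1 else 0))
       \<longrightarrow> A \<in> HH p q)"

lemma body_base: "bodyP p q (p + q)"
  unfolding bodyP_def
proof (intro allI impI, elim conjE)
  let ?n = "p + q"
  fix A assume A: "A \<in> carrier (GLgrp p q)" and inv: "\<forall>c<?n. \<forall>r<?n. A r c {} = (if r = c then 1 else 0)"
  have Ae: "even_gmat p q A" using A by (rule carrier_even)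
  have gA: "mgood ?n A" by (rule even_gmat_good[OF Ae])
  define F where "F = \<Union>{S. \<exists>i<?n. \<exists>j<?n. A i j S \<noteq> 0}"
  have fF: "finite F" unfolding F_def by (rule supp_fin[OF Ae])
  have supp: "\<forall>i j S. A i j S \<noteq> 0 \<longrightarrow> S \<subseteq> F" unfolding F_def using supp_sub[OF Ae] by blast
  have low: "\<forall>i j S. card S < 1 \<longrightarrow> A i j S = gmat_one ?n i j S"
  proof (intro allI impI)
    fix i j and S :: "nat set" assume "card S < 1"
    hence "S = {} \<or> infinite S" by auto
    thus "A i j S = gmat_one ?n i j S"
    proof
      assume S: "S = {}"
      show ?thesis
      proof (cases "i < ?n \<and> j < ?n")
        case True thus ?thesis using inv S by (simp add: one_empty)
      next
        case False
        hence "A i j = gzero" by (rule even_gmat_out[OF Ae])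
        thus ?thesis using False by (auto simp: gmat_one_def)
      qed
    next
      assume S: "infinite S"
      have "A i j S = 0" using gA S by (simp add: mgood_def gfin_def)
      moreover have "gmat_one ?n i j S = 0" using S one_nz by fastforce
      ultimately show ?thesis by simp
    qed
  qed
  have "nilP p q F 1" by (rule nil_all[OF fF]) simp_all
  thus "A \<in> HH p q" using A supp low unfolding nilP_def by blast
qed

lemma body_R:
  assumes j: "j < p + q" and IH: "bodyP p q (Suc j)"
  shows "card {r. r < p + q \<and> r \<noteq> j \<and> A r j {} \<noteq> 0} = N \<Longrightarrow> A \<in> carrier (GLgrp p q)
     \<Longrightarrow> (\<forall>c<j. \<forall>r<p+q. A r c {} = (if r = c then 1 else 0)) \<Longrightarrow> A j j {} = 1 \<Longrightarrow> A \<in> HH p q"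
proof (induction N arbitrary: A rule: less_induct)
  case (less N A)
  let ?n = "p + q"
  have A: "A \<in> carrier (GLgrp p q)" by fact
  have inv: "\<forall>c<j. \<forall>r<?n. A r c {} = (if r = c then 1 else 0)" by fact
  have Ajj: "A j j {} = 1" by fact
  have Ae: "even_gmat p q A" using A by (rule carrier_even)
  let ?R = "\<lambda>B. {r. r < ?n \<and> r \<noteq> j \<and> B r j {} \<noteq> 0}"
  have finR: "finite (?R B)" for B by (rule finite_subset[of _ "{..<?n}"]) auto
  show ?case
  proof (cases "?R A = {}")
    case True
    have "\<forall>c<Suc j. \<forall>r<?n. A r c {} = (if r = c then 1 else 0)"
    proof (intro allI impI)
      fix c r assume c: "c < Suc j" and r: "r < ?n"
      show "A r c {} = (if r = c then 1 else 0)"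
      proof (cases "c < j")
        case True thus ?thesis using inv r by blast
      next
        case False
        hence cj: "c = j" using c by simp
        show ?thesis
        proof (cases "r = j")
          case True thus ?thesis using Ajj cj by simp
        next
          case False
          hence "A r j {} = 0" using \<open>?R A = {}\<close> r by blast
          thus ?thesis using False cj by simp
        qed
      qed
    qed
    thus ?thesis using IH A unfolding bodyP_def by blast
  next
    case False
    then obtain r where r: "r < ?n" and rj: "r \<noteq> j" and xnz: "A r j {} \<noteq> 0" by blast
    define x where "x = A r j {}"
    have "ghom (ipar p r j) (A r j)" by (rule even_gmat_hom[OF Ae r j])
    hence ip: "ipar p r j" using xnz by (rule ipar_of_body)
    define Y where "Y = Esg r j (cst (- x))"
    have Ygl: "Y \<in> gl p q" unfolding Y_def by (rule esg_gl[OF r j]) (use ip in simp)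
    have eY: "gexp p q Y = madd (gmat_one ?n) Y"
      unfolding Y_def by (rule gexp_esg_nil[OF r j gfin_cst]) (use rj in simp)
    define A' where "A' = madd A (gmat_mult ?n Y A)"
    have A'c: "A' \<in> carrier (GLgrp p q)" unfolding A'_def by (rule step_carrier[OF Ygl A eY])
    have ent: "A' k l {} = A k l {} + (if k = r \<and> l < ?n then - x * A j l {} else 0)" for k l
      unfolding A'_def Y_def body_upd[OF r j] by (simp add: cst_def)
    have inv': "\<forall>c<j. \<forall>k<?n. A' k c {} = (if k = c then 1 else 0)"
    proof (intro allI impI)
      fix c k assume c: "c < j" and k: "k < ?n"
      have "A j c {} = 0" using inv c j by auto
      thus "A' k c {} = (if k = c then 1 else 0)" using ent[of k c] inv c k by auto
    qed
    have A'jj: "A' j j {} = 1" using ent[of j j] rj Ajj by simp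
    have A'rj: "A' r j {} = 0" using ent[of r j] Ajj j by (simp add: x_def)
    have sub: "?R A' \<subseteq> ?R A - {r}"
    proof
      fix k assume "k \<in> ?R A'"
      hence k: "k < ?n" "k \<noteq> j" "A' k j {} \<noteq> 0" by auto
      hence kr: "k \<noteq> r" using A'rj by auto
      hence "A' k j {} = A k j {}" using ent[of k j] by simp
      thus "k \<in> ?R A - {r}" using k kr by auto
    qed
    have "card (?R A') \<le> card (?R A - {r})" by (rule card_mono[OF _ sub]) (use finR in simp)
    also have "\<dots> < card (?R A)" by (rule card_Diff1_less[OF finR]) (use r rj xnz in simp)
    finally have "card (?R A') < N" using less.prems(1) by simp
    hence "A' \<in> HH p q" using less.IH A'c inv' A'jj by blast
    thus ?thesis unfolding A'_def by (rule step_back[OF Ygl A eY])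
  qed
qed

lemma body_S:
  assumes j: "j < p + q" and IH: "bodyP p q (Suc j)" and A: "A \<in> carrier (GLgrp p q)"
    and inv: "\<forall>c<j. \<forall>r<p+q. A r c {} = (if r = c then 1 else 0)" and anz: "A j j {} \<noteq> 0"
  shows "A \<in> HH p q"
proof -
  let ?n = "p + q"
  define a where "a = A j j {}"
  have a0: "a \<noteq> 0" using anz by (simp add: a_def)
  obtain z where z: "exp z = inverse a" using exp_surj[of "inverse a"] a0 by auto
  define e where "e = exp z - 1"
  define Y where "Y = Esg j j (cst z)"
  have Ygl: "Y \<in> gl p q" unfolding Y_def by (rule esg_gl[OF j j]) (simp add: ipar_def)
  have eY: "gexp p q Y = madd (gmat_one ?n) (Esg j j (cst e))"
    unfolding Y_def e_def by (rule gexp_diag[OF j])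
  define A' where "A' = madd A (gmat_mult ?n (Esg j j (cst e)) A)"
  have A'c: "A' \<in> carrier (GLgrp p q)" unfolding A'_def by (rule step_carrier[OF Ygl A eY])
  have ent: "A' k l {} = A k l {} + (if k = j \<and> l < ?n then e * A j l {} else 0)" for k l
    unfolding A'_def body_upd[OF j j] by (simp add: cst_def)
  have inv': "\<forall>c<j. \<forall>k<?n. A' k c {} = (if k = c then 1 else 0)"
  proof (intro allI impI)
    fix c k assume c: "c < j" and k: "k < ?n"
    have "A j c {} = 0" using inv c j by auto
    thus "A' k c {} = (if k = c then 1 else 0)" using ent[of k c] inv c k by auto
  qed
  have "a + e * a = 1" using a0 z by (simp add: e_def field_simps)
  hence A'jj: "A' j j {} = 1" using ent[of j j] j by (simp add: a_def)
  have "A' \<in> HH p q" by (rule body_R[OF j IH refl A'c inv' A'jj])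
  thus ?thesis unfolding A'_def by (rule step_back[OF Ygl A eY])
qed

lemma body_step:
  assumes j: "j < p + q" and IH: "bodyP p q (Suc j)"
  shows "bodyP p q j"
  unfolding bodyP_def
proof (intro allI impI, elim conjE)
  let ?n = "p + q"
  fix A assume A: "A \<in> carrier (GLgrp p q)" and inv: "\<forall>c<j. \<forall>r<?n. A r c {} = (if r = c then 1 else 0)"
  have Ae: "even_gmat p q A" using A by (rule carrier_even)
  show "A \<in> HH p q"
  proof (cases "A j j {} = 0")
    case False thus ?thesis by (rule body_S[OF j IH A inv])
  next
    case True
    obtain i where i: "j \<le> i" "i < ?n" and inz: "A i j {} \<noteq> 0" using pivot[OF A j inv] by blast
    have ij: "i \<noteq> j" using True inz by auto
    have "ghom (ipar p i j) (A i j)" by (rule even_gmat_hom[OF Ae i(2) j])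
    hence ip: "ipar p i j" using inz by (rule ipar_of_body)
    hence ip': "ipar p j i" by (simp add: ipar_def)
    define Y where "Y = Esg j i gone"
    have Ygl: "Y \<in> gl p q" unfolding Y_def by (rule esg_gl[OF j i(2)]) (use ip' in simp)
    have eY: "gexp p q Y = madd (gmat_one ?n) Y"
      unfolding Y_def by (rule gexp_esg_nil[OF j i(2) gfin_gone]) (use ij in simp)
    define A' where "A' = madd A (gmat_mult ?n Y A)"
    have A'c: "A' \<in> carrier (GLgrp p q)" unfolding A'_def by (rule step_carrier[OF Ygl A eY])
    have ent: "A' k l {} = A k l {} + (if k = j \<and> l < ?n then A i l {} else 0)" for k l
      unfolding A'_def Y_def body_upd[OF j i(2)] by (simp add: gone_def)
    have inv': "\<forall>c<j. \<forall>k<?n. A' k c {} = (if k = c then 1 else 0)"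
    proof (intro allI impI)
      fix c k assume c: "c < j" and k: "k < ?n"
      have "A i c {} = 0" using inv c i by auto
      thus "A' k c {} = (if k = c then 1 else 0)" using ent[of k c] inv c k by auto
    qed
    have "A' j j {} \<noteq> 0" using ent[of j j] True inz j by simp
    hence "A' \<in> HH p q" by (rule body_S[OF j IH A'c inv'])
    thus ?thesis unfolding A'_def by (rule step_back[OF Ygl A eY])
  qed
qed

lemma body_all: "bodyP p q 0"
proof -
  have "0 \<le> p + q" by simp
  thus ?thesis
  proof (induction rule: inc_induct)
    case base show ?case by (rule body_base)
  next
    case (step m) thus ?case using body_step by blast
  qed
qed

lemma carrier_HH: "carrier (GLgrp p q) \<subseteq> HH p q"
  using body_all[of p q] unfolding bodyP_def by blast

theorem lemma2p6:
  fixes p q :: nat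
  shows "(\<forall>X \<in> gl p q. (\<forall>i j U. convergent (\<lambda>m. expsum p q X m i j U))
            \<and> gexp p q X \<in> carrier (GLgrp p q))
         \<and> generate (GLgrp p q) (gexp p q ` gl p q) = carrier (GLgrp p q)"
proof (rule conjI)
  show "\<forall>X \<in> gl p q. (\<forall>i j U. convergent (\<lambda>m. expsum p q X m i j U)) \<and> gexp p q X \<in> carrier (GLgrp p q)"
  proof
    fix X assume X: "X \<in> gl p q"
    show "(\<forall>i j U. convergent (\<lambda>m. expsum p q X m i j U)) \<and> gexp p q X \<in> carrier (GLgrp p q)"
      using expsum_convergent gexp_carrier[OF X] by blast
  qed
next
  show "generate (GLgrp p q) (gexp p q ` gl p q) = carrier (GLgrp p q)"
  proof
    have sub: "gexp p q ` gl p q \<subseteq> carrier (GLgrp p q)" using gexp_carrier by blast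
    show "generate (GLgrp p q) (gexp p q ` gl p q) \<subseteq> carrier (GLgrp p q)"
      using group.generate_in_carrier[OF GL_group sub] by blast
    show "carrier (GLgrp p q) \<subseteq> generate (GLgrp p q) (gexp p q ` gl p q)"
      using carrier_HH unfolding HH_def .
  qed
qed

end
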